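(* Consider an asynchronous execution of the Arrow protocol for a set of requests $R$ on a tree $T$ (extended by virtual broadcast messages), with requests indexed $r_0,r_1,\dots$ in the resulting queueing order, and let $r_i,r_j$ be requests with $i<j$. Then (1) $t_i-t_j\le d_T(v_i,v_j)$, and (2) if $i\ge1$, $t_i+\Delta(r_i,v_{i-1})\le t_j+d_T(v_{i-1},v_j)$.
   Context: Requests $r_i=(v_i,t_i)$ are issued at node $v_i$ at time $t_i\ge0$; $r_0=(v_0,0)$ is a dummy request; $d_T$ is weighted tree distance. Arrow protocol on $T$: each node $u$ has a pointer $\mathrm{link}(u)$ (itself or a neighbour), initially pointing towards $v_0$ with $\mathrm{link}(v_0)=v_0$. When $r$ is issued at $v$: if $\mathrm{link}(v)=v$, $r$ is queued behind the previous request at $v$; otherwise atomically $\mathrm{find}(r)$ ("find predecessor") is sent to $\mathrm{link}(v)$ and $\mathrm{link}(v):=v$. When $u$ receives $\mathrm{find}(r)$ from $w$: if $\mathrm{link}(u)=u$, atomically $r$ is queued behind the last request issued at $u$ and $\mathrm{link}(u):=w$; otherwise it is atomically forwarded to $\mathrm{link}(u)$ and $\mathrm{link}(u):=w$. Asynchronous: each delay over edge $e$ is at most the weight $w(e)$. Virtual extension: the "find predecessor" message of each request is additionally broadcast to the whole tree by virtual messages not influencing the protocol; virtual messages over edge $e$ have delay exactly $w(e)$, and at simultaneous arrival real messages are processed first. $\Delta(r,u)$ is the time the "find predecessor" message of $r$ needs from its issue to reach node $u$. *)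

theory Defs
  imports Complex_Main
begin

definition is_walk :: "('v \<Rightarrow> 'v \<Rightarrow> bool) \<Rightarrow> 'v list \<Rightarrow> bool" where
  "is_walk E xs \<longleftrightarrow> xs \<noteq> [] \<and> (\<forall>i. Suc i < length xs \<longrightarrow> E (xs ! i) (xs ! Suc i))"

fun walk_weight :: "('v \<Rightarrow> 'v \<Rightarrow> real) \<Rightarrow> 'v list \<Rightarrow> real" where
  "walk_weight w (x # y # xs) = w x y + walk_weight w (y # xs)"
| "walk_weight w _ = 0"

definition tree_dist :: "('v \<Rightarrow> 'v \<Rightarrow> bool) \<Rightarrow> ('v \<Rightarrow> 'v \<Rightarrow> real) \<Rightarrow> 'v \<Rightarrow> 'v \<Rightarrow> real" where
  "tree_dist E w u v =
     Inf {walk_weight w xs | xs. is_walk E xs \<and> hd xs = u \<and> last xs = v}"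

definition is_cycle :: "('v \<Rightarrow> 'v \<Rightarrow> bool) \<Rightarrow> 'v list \<Rightarrow> bool" where
  "is_cycle E xs \<longleftrightarrow> length xs \<ge> 3 \<and> distinct xs \<and> is_walk E xs \<and> E (last xs) (hd xs)"

definition weighted_tree :: "'v set \<Rightarrow> ('v \<Rightarrow> 'v \<Rightarrow> bool) \<Rightarrow> ('v \<Rightarrow> 'v \<Rightarrow> real) \<Rightarrow> bool" where
  "weighted_tree V E w \<longleftrightarrow>
     finite V \<and> V \<noteq> {} \<and>
     (\<forall>u v. E u v \<longrightarrow> u \<in> V \<and> v \<in> V) \<and>
     (\<forall>u v. E u v \<longleftrightarrow> E v u) \<and> (\<forall>u. \<not> E u u) \<and>
     (\<forall>u v. E u v \<longrightarrow> 0 < w u v \<and> w u v = w v u) \<and>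
     (\<forall>u\<in>V. \<forall>v\<in>V. \<exists>xs. is_walk E xs \<and> hd xs = u \<and> last xs = v) \<and>
     \<not> (\<exists>xs. is_cycle E xs)"

text \<open>Requests are elements of R; request r is issued at node (node r) at time (time r);
  r0 is the dummy request (v0, 0).\<close>
definition arrow_requests ::
  "'v set \<Rightarrow> 'r set \<Rightarrow> 'r \<Rightarrow> ('r \<Rightarrow> 'v) \<Rightarrow> ('r \<Rightarrow> real) \<Rightarrow> bool" where
  "arrow_requests V R r0 node time \<longleftrightarrow>
     finite R \<and> r0 \<in> R \<and> time r0 = 0 \<and> (\<forall>r\<in>R. node r \<in> V \<and> 0 \<le> time r)"

text \<open>Initial pointers: every node points to its neighbour towards v0, link(v0) = v0.\<close>
definition initial_links ::
  "'v set \<Rightarrow> ('v \<Rightarrow> 'v \<Rightarrow> bool) \<Rightarrow> ('v \<Rightarrow> 'v \<Rightarrow> real) \<Rightarrow> 'v \<Rightarrow> ('v \<Rightarrow> 'v) \<Rightarrow> bool" where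
  "initial_links V E w v0 lnk0 \<longleftrightarrow>
     lnk0 v0 = v0 \<and>
     (\<forall>u\<in>V. u \<noteq> v0 \<longrightarrow> E u (lnk0 u) \<and>
        tree_dist E w u v0 = w u (lnk0 u) + tree_dist E w (lnk0 u) v0)"

text \<open>A message in transit is (request, sender, receiver, send time).
  lst u = last request issued at u (initially r0);
  prd r = request behind which r got queued;
  vis r u = time at which the (real) find message of r was at node u
  (issue time at the issuing node, receipt time elsewhere).\<close>
record ('v, 'r) arrow_state =
  clk :: real
  lnk :: "'v \<Rightarrow> 'v"
  lst :: "'v \<Rightarrow> 'r"
  iss :: "'r set"
  trans :: "('r \<times> 'v \<times> 'v \<times> real) set"
  prd :: "'r \<Rightarrow> 'r option"
  vis :: "'r \<Rightarrow> 'v \<Rightarrow> real option"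

datatype ('v, 'r) arrow_event = Issue 'r | Deliver "'r \<times> 'v \<times> 'v \<times> real" real

definition init_state :: "('v \<Rightarrow> 'v) \<Rightarrow> 'r \<Rightarrow> ('v, 'r) arrow_state" where
  "init_state lnk0 r0 = \<lparr>clk = 0, lnk = lnk0, lst = (\<lambda>_. r0), iss = {}, trans = {},
     prd = (\<lambda>_. None), vis = (\<lambda>_ _. None)\<rparr>"

text \<open>Global time never decreases along an execution.\<close>
fun enabled :: "('v \<Rightarrow> 'v \<Rightarrow> real) \<Rightarrow> 'r set \<Rightarrow> 'r \<Rightarrow> ('r \<Rightarrow> real) \<Rightarrow>
    ('v, 'r) arrow_state \<Rightarrow> ('v, 'r) arrow_event \<Rightarrow> bool" where
  "enabled w R r0 time s (Issue r) \<longleftrightarrow>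
     r \<in> R \<and> r \<noteq> r0 \<and> r \<notin> iss s \<and> clk s \<le> time r"
| "enabled w R r0 time s (Deliver (r, x, u, \<sigma>) \<tau>) \<longleftrightarrow>
     (r, x, u, \<sigma>) \<in> trans s \<and> clk s \<le> \<tau> \<and> \<sigma> \<le> \<tau> \<and> \<tau> \<le> \<sigma> + w x u"

fun step :: "('r \<Rightarrow> 'v) \<Rightarrow> ('r \<Rightarrow> real) \<Rightarrow>
    ('v, 'r) arrow_state \<Rightarrow> ('v, 'r) arrow_event \<Rightarrow> ('v, 'r) arrow_state" where
  "step node time s (Issue r) =
     (let v = node r;
          s' = s\<lparr>clk := time r, lst := (lst s)(v := r), iss := insert r (iss s),
                 vis := (vis s)(r := (vis s r)(v := Some (time r)))\<rparr>
      in if lnk s v = v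
         then s'\<lparr>prd := (prd s)(r := Some (lst s v))\<rparr>
         else s'\<lparr>lnk := (lnk s)(v := v),
                 trans := insert (r, v, lnk s v, time r) (trans s)\<rparr>)"
| "step node time s (Deliver (r, x, u, \<sigma>) \<tau>) =
     (let s' = s\<lparr>clk := \<tau>, trans := trans s - {(r, x, u, \<sigma>)},
                 vis := (vis s)(r := (vis s r)(u := Some \<tau>))\<rparr>
      in if lnk s u = u
         then s'\<lparr>lnk := (lnk s)(u := x), prd := (prd s)(r := Some (lst s u))\<rparr>
         else s'\<lparr>lnk := (lnk s)(u := x),
                 trans := insert (r, u, lnk s u, \<tau>) (trans s')\<rparr>)"

fun valid_run :: "('v \<Rightarrow> 'v \<Rightarrow> real) \<Rightarrow> 'r set \<Rightarrow> 'r \<Rightarrow> ('r \<Rightarrow> 'v) \<Rightarrow> ('r \<Rightarrow> real) \<Rightarrow>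
    ('v, 'r) arrow_state \<Rightarrow> ('v, 'r) arrow_event list \<Rightarrow> bool" where
  "valid_run w R r0 node time s [] = True"
| "valid_run w R r0 node time s (e # es) =
     (enabled w R r0 time s e \<and> valid_run w R r0 node time (step node time s e) es)"

definition final_state :: "('r \<Rightarrow> 'v) \<Rightarrow> ('r \<Rightarrow> real) \<Rightarrow> 'r \<Rightarrow> ('v \<Rightarrow> 'v) \<Rightarrow>
    ('v, 'r) arrow_event list \<Rightarrow> ('v, 'r) arrow_state" where
  "final_state node time r0 lnk0 es = foldl (step node time) (init_state lnk0 r0) es"

definition arrow_execution :: "('v \<Rightarrow> 'v \<Rightarrow> real) \<Rightarrow> 'r set \<Rightarrow> 'r \<Rightarrow> ('r \<Rightarrow> 'v) \<Rightarrow>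
    ('r \<Rightarrow> real) \<Rightarrow> ('v \<Rightarrow> 'v) \<Rightarrow> ('v, 'r) arrow_event list \<Rightarrow> bool" where
  "arrow_execution w R r0 node time lnk0 es \<longleftrightarrow>
     valid_run w R r0 node time (init_state lnk0 r0) es \<and>
     iss (final_state node time r0 lnk0 es) = R - {r0} \<and>
     trans (final_state node time r0 lnk0 es) = {}"

text \<open>Resulting queueing order: a comes before b (i < j for a = r_i, b = r_j).\<close>
definition queue_before :: "'r set \<Rightarrow> ('v, 'r) arrow_state \<Rightarrow> ('r \<times> 'r) set" where
  "queue_before R s = {(x, y). y \<in> R \<and> prd s y = Some x}\<^sup>+"

text \<open>Virtual extension: the find message of r is broadcast over the whole tree; the
  copy leaving the real path at node p (at the time the real message is at p) travels
  with delay exactly the edge weights. Hence the message of r reaches u at time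
  vis r p + d_T(p,u), where p is the node of the real path closest to u.\<close>
definition reach_time :: "('v \<Rightarrow> 'v \<Rightarrow> bool) \<Rightarrow> ('v \<Rightarrow> 'v \<Rightarrow> real) \<Rightarrow>
    ('v, 'r) arrow_state \<Rightarrow> 'r \<Rightarrow> 'v \<Rightarrow> real" where
  "reach_time E w s r u =
     (let p = arg_min (\<lambda>p. tree_dist E w p u) (\<lambda>p. vis s r p \<noteq> None)
      in the (vis s r p) + tree_dist E w p u)"

definition Delta :: "('v \<Rightarrow> 'v \<Rightarrow> bool) \<Rightarrow> ('v \<Rightarrow> 'v \<Rightarrow> real) \<Rightarrow>
    ('v, 'r) arrow_state \<Rightarrow> ('r \<Rightarrow> real) \<Rightarrow> 'r \<Rightarrow> 'v \<Rightarrow> real" where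
  "Delta E w s time r u = reach_time E w s r u - time r"

end

theory Submission
  imports Defs
begin

lemma walk_weight_sum:
  "walk_weight w xs = (\<Sum>i < length xs - 1. w (xs!i) (xs!Suc i))"
proof (induction w xs rule: walk_weight.induct)
  case (1 w x y xs)
  have "(\<Sum>i < length (x # y # xs) - 1. w ((x # y # xs)!i) ((x # y # xs)!Suc i))
      = (\<Sum>i < Suc (length (y # xs) - 1). w ((x # y # xs)!i) ((x # y # xs)!Suc i))"
    by simp
  also have "\<dots> = w x y + (\<Sum>i < length (y # xs) - 1. w ((y # xs)!i) ((y # xs)!Suc i))"
    by (subst sum.lessThan_Suc_shift) simp
  finally show ?case using 1 by simp
qed auto

locale wtree =
  fixes V :: "'v set" and E :: "'v \<Rightarrow> 'v \<Rightarrow> bool" and w :: "'v \<Rightarrow> 'v \<Rightarrow> real"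
  assumes wt: "weighted_tree V E w"
begin

lemma finV: "finite V" using wt by (simp add: weighted_tree_def)
lemma EV: "E u v \<Longrightarrow> u \<in> V \<and> v \<in> V" using wt unfolding weighted_tree_def by blast
lemma Esym: "E u v \<Longrightarrow> E v u" using wt unfolding weighted_tree_def by blast
lemma Eirr: "\<not> E u u" using wt by (simp add: weighted_tree_def)
lemma wpos: "E u v \<Longrightarrow> 0 < w u v" using wt by (simp add: weighted_tree_def)
lemma wsym: "E u v \<Longrightarrow> w u v = w v u" using wt by (simp add: weighted_tree_def)
lemma conn: "u \<in> V \<Longrightarrow> v \<in> V \<Longrightarrow> \<exists>xs. is_walk E xs \<and> hd xs = u \<and> last xs = v"
  using wt by (simp add: weighted_tree_def)
lemma nocyc: "\<not> is_cycle E xs" using wt by (simp add: weighted_tree_def)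

lemma no_cycle_list:
  assumes "distinct xs" "length xs \<ge> 3" "\<And>i. Suc i < length xs \<Longrightarrow> E (xs!i) (xs!Suc i)"
    "E (last xs) (hd xs)"
  shows False
  using nocyc[of xs] assms by (auto simp: is_cycle_def is_walk_def)

definition WS where
  "WS u v = {walk_weight w xs | xs. is_walk E xs \<and> hd xs = u \<and> last xs = v}"

lemma tree_dist_WS: "tree_dist E w u v = Inf (WS u v)"
  by (simp add: tree_dist_def WS_def)

lemma walk_weight_nonneg:
  assumes "is_walk E xs" shows "0 \<le> walk_weight w xs"
proof -
  have "\<forall>i < length xs - 1. 0 \<le> w (xs!i) (xs!Suc i)"
  proof (intro allI impI)
    fix i assume "i < length xs - 1"
    then have "E (xs!i) (xs!Suc i)" using assms unfolding is_walk_def by auto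
    then show "0 \<le> w (xs!i) (xs!Suc i)" using wpos by (simp add: less_imp_le)
  qed
  then show ?thesis unfolding walk_weight_sum by (intro sum_nonneg) auto
qed

lemma WS_bdd: "bdd_below (WS u v)"
  unfolding WS_def by (rule bdd_belowI[of _ 0]) (auto intro: walk_weight_nonneg)

lemma WS_ne: "u \<in> V \<Longrightarrow> v \<in> V \<Longrightarrow> WS u v \<noteq> {}"
  using conn unfolding WS_def by blast

lemma dist_le_walk:
  "is_walk E xs \<Longrightarrow> hd xs = u \<Longrightarrow> last xs = v \<Longrightarrow> tree_dist E w u v \<le> walk_weight w xs"
  unfolding tree_dist_WS by (rule cInf_lower) (auto simp: WS_def intro: WS_bdd[unfolded WS_def])

lemma dist_ge:
  assumes "u \<in> V" "v \<in> V"
    "\<And>xs. is_walk E xs \<Longrightarrow> hd xs = u \<Longrightarrow> last xs = v \<Longrightarrow> c \<le> walk_weight w xs"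
  shows "c \<le> tree_dist E w u v"
  unfolding tree_dist_WS using WS_ne[OF assms(1,2)]
  by (intro cInf_greatest) (auto simp: WS_def assms(3))

lemma dist_nonneg: "u \<in> V \<Longrightarrow> v \<in> V \<Longrightarrow> 0 \<le> tree_dist E w u v"
  by (rule dist_ge) (auto intro: walk_weight_nonneg)

lemma dist_self: "u \<in> V \<Longrightarrow> tree_dist E w u u = 0"
proof -
  assume u: "u \<in> V"
  have "tree_dist E w u u \<le> walk_weight w [u]"
    by (rule dist_le_walk) (auto simp: is_walk_def)
  then show ?thesis using dist_nonneg[OF u u] by simp
qed

lemma walk_rev:
  assumes "is_walk E xs" shows "is_walk E (rev xs)"
  using assms unfolding is_walk_def
  apply (auto simp: rev_nth)
  by (metis Esym Suc_diff_Suc Suc_lessD diff_Suc_less length_greater_0_conv less_diff_conv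
      add.commute plus_1_eq_Suc)

lemma walk_weight_rev:
  assumes "is_walk E xs" shows "walk_weight w (rev xs) = walk_weight w xs"
proof -
  let ?n = "length xs - 1"
  have "walk_weight w (rev xs) = (\<Sum>i < ?n. w (rev xs!i) (rev xs!Suc i))"
    by (simp add: walk_weight_sum)
  also have "\<dots> = (\<Sum>i < ?n. w (xs!(?n - i)) (xs!(?n - Suc i)))"
    by (intro sum.cong refl) (auto simp: rev_nth Suc_diff_Suc)
  also have "\<dots> = (\<Sum>i < ?n. w (xs!(?n - Suc i)) (xs!(?n - i)))"
  proof (intro sum.cong refl)
    fix i assume i: "i \<in> {..<?n}"
    have "E (xs!(?n - Suc i)) (xs!Suc (?n - Suc i))"
      using assms i unfolding is_walk_def by auto
    moreover have "Suc (?n - Suc i) = ?n - i" using i by auto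
    ultimately show "w (xs!(?n - i)) (xs!(?n - Suc i)) = w (xs!(?n - Suc i)) (xs!(?n - i))"
      using wsym by metis
  qed
  also have "\<dots> = (\<Sum>i < ?n. w (xs!i) (xs!Suc i))"
  proof -
    have "(\<Sum>i < ?n. w (xs!(?n - Suc i)) (xs!(?n - i))) = (\<Sum>i < ?n. w (xs!(?n - Suc i)) (xs!Suc (?n - Suc i)))"
      by (intro sum.cong refl) (auto simp: Suc_diff_Suc)
    also have "\<dots> = (\<Sum>i < ?n. w (xs!i) (xs!Suc i))"
      by (rule sum.reindex_bij_witness[where i="\<lambda>i. ?n - Suc i" and j="\<lambda>i. ?n - Suc i"]) auto
    finally show ?thesis .
  qed
  finally show ?thesis by (simp add: walk_weight_sum)
qed

lemma dist_sym: "tree_dist E w u v = tree_dist E w v u"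
proof -
  have "WS u v = WS v u"
    unfolding WS_def
    apply auto
     apply (metis walk_rev walk_weight_rev hd_rev last_rev)+
    done
  then show ?thesis by (simp add: tree_dist_WS)
qed


lemma is_walk_Cons2: "is_walk E (x # y # xs) \<longleftrightarrow> E x y \<and> is_walk E (y # xs)"
  unfolding is_walk_def
  apply auto
  using less_Suc_eq_0_disj by force

lemma is_walk_single: "is_walk E [x]"
  by (simp add: is_walk_def)

lemma walk_append:
  assumes "is_walk E xs" "is_walk E ys" "last xs = hd ys"
  shows "is_walk E (xs @ tl ys) \<and> walk_weight w (xs @ tl ys) = walk_weight w xs + walk_weight w ys"
  using assms
proof (induction xs)
  case Nil then show ?case by (simp add: is_walk_def)
next
  case (Cons x xs)
  show ?case
  proof (cases xs)
    case Nil
    then have "x # tl ys = ys" using Cons.prems by (cases ys) (auto simp: is_walk_def)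
    then show ?thesis using Cons.prems Nil by simp
  next
    case (Cons y xs')
    have ih: "is_walk E (xs @ tl ys) \<and> walk_weight w (xs @ tl ys) = walk_weight w xs + walk_weight w ys"
      using Cons.IH Cons.prems Cons by (auto simp: is_walk_Cons2)
    show ?thesis using ih Cons.prems Cons by (auto simp: is_walk_Cons2)
  qed
qed

lemma dist_triangle:
  assumes "u \<in> V" "m \<in> V" "v \<in> V"
  shows "tree_dist E w u v \<le> tree_dist E w u m + tree_dist E w m v"
proof -
  have key: "tree_dist E w u v \<le> walk_weight w W1 + walk_weight w W2"
    if "is_walk E W1" "hd W1 = u" "last W1 = m" "is_walk E W2" "hd W2 = m" "last W2 = v" for W1 W2
  proof -
    have a: "is_walk E (W1 @ tl W2) \<and> walk_weight w (W1 @ tl W2) = walk_weight w W1 + walk_weight w W2"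
      using walk_append that by auto
    have "W1 \<noteq> []" "W2 \<noteq> []" using that by (auto simp: is_walk_def)
    have "hd (W1 @ tl W2) = u" using \<open>W1 \<noteq> []\<close> that by simp
    moreover have "last (W1 @ tl W2) = v"
    proof (cases "tl W2 = []")
      case True
      then have "W2 = [hd W2]" using \<open>W2 \<noteq> []\<close> by (cases W2) auto
      then show ?thesis using True that by (metis append.right_neutral last.simps)
    next
      case False
      then show ?thesis using that by (simp add: last_tl)
    qed
    ultimately have "hd (W1 @ tl W2) = u" "last (W1 @ tl W2) = v" by auto
    then show ?thesis using dist_le_walk a by metis
  qed
  have "tree_dist E w u v - walk_weight w W2 \<le> tree_dist E w u m"
    if "is_walk E W2" "hd W2 = m" "last W2 = v" for W2
    using key that by (intro dist_ge assms) (auto simp: algebra_simps)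
  then have "tree_dist E w u v - tree_dist E w u m \<le> tree_dist E w m v"
    by (intro dist_ge assms) (auto simp: algebra_simps)
  then show ?thesis by simp
qed

lemma walk_take:
  assumes "is_walk E W" "i < length W"
  shows "is_walk E (take (Suc i) W) \<and> hd (take (Suc i) W) = hd W \<and> last (take (Suc i) W) = W!i"
proof -
  have ne: "W \<noteq> []" using assms by auto
  have "is_walk E (take (Suc i) W)"
    using assms ne unfolding is_walk_def by auto
  moreover have "last (take (Suc i) W) = W!i"
    using assms by (subst last_conv_nth) (auto simp: min_def intro: arg_cong[where f="(!) W"])
  ultimately show ?thesis by simp
qed

lemma walk_weight_take:
  assumes "k \<le> length W"
  shows "walk_weight w (take k W) = (\<Sum>j < k - 1. w (W!j) (W!Suc j))"
  unfolding walk_weight_sum using assms by (intro sum.cong) auto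

lemma walk_weight_take_Suc:
  assumes "Suc i < length W"
  shows "walk_weight w (take (Suc (Suc i)) W) = walk_weight w (take (Suc i) W) + w (W!i) (W!Suc i)"
  using assms by (simp add: walk_weight_take)

lemma walk_weight_take_le:
  assumes "is_walk E W"
  shows "walk_weight w (take k W) \<le> walk_weight w W"
proof (cases "k \<le> length W")
  case True
  have nn: "\<forall>j < length W - 1. 0 \<le> w (W!j) (W!Suc j)"
  proof (intro allI impI)
    fix j assume "j < length W - 1"
    then have "E (W!j) (W!Suc j)" using assms unfolding is_walk_def by auto
    then show "0 \<le> w (W!j) (W!Suc j)" using wpos by (simp add: less_imp_le)
  qed
  have "walk_weight w (take k W) = (\<Sum>j < k - 1. w (W!j) (W!Suc j))"
    using True by (rule walk_weight_take)
  also have "\<dots> \<le> (\<Sum>j < length W - 1. w (W!j) (W!Suc j))"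
    using True nn by (intro sum_mono2) auto
  finally show ?thesis by (simp add: walk_weight_sum)
next
  case False then show ?thesis by simp
qed

end

definition lok :: "'v set \<Rightarrow> ('v \<Rightarrow> 'v \<Rightarrow> bool) \<Rightarrow> ('v \<Rightarrow> 'v) \<Rightarrow> bool" where
  "lok V E L \<longleftrightarrow> (\<forall>x\<in>V. L x \<in> V \<and> (L x \<noteq> x \<longrightarrow> E x (L x))) \<and>
     (\<forall>x\<in>V. \<forall>y. L x = y \<and> L y = x \<longrightarrow> x = y)"

definition sinkf :: "'v set \<Rightarrow> ('v \<Rightarrow> 'v) \<Rightarrow> 'v \<Rightarrow> 'v" where
  "sinkf V L q = (L ^^ card V) q"

lemma fix_stays: "L ((L^^i) q) = (L^^i) q \<Longrightarrow> i \<le> j \<Longrightarrow> (L^^j) q = (L^^i) q"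
proof (induction j)
  case 0 then show ?case by simp
next
  case (Suc j)
  then show ?case by (cases "i = Suc j") (auto simp: le_Suc_eq)
qed

lemma funpow_app: "(f^^a) ((f^^b) x) = (f^^(a+b)) x"
  by (simp add: funpow_add)

lemma funpow_fix: "L q = q \<Longrightarrow> (L^^k) q = q"
  by (induction k) auto

context wtree
begin

lemma orb_V: "lok V E L \<Longrightarrow> q \<in> V \<Longrightarrow> (L^^i) q \<in> V"
  by (induction i) (auto simp: lok_def)

lemma lok_E: "lok V E L \<Longrightarrow> q \<in> V \<Longrightarrow> L q \<noteq> q \<Longrightarrow> E q (L q)"
  by (auto simp: lok_def)

lemma orb_dist_cycle:
  assumes L: "lok V E L" and q: "q \<in> V"
    and dist: "\<And>i j. i < j \<Longrightarrow> j < m \<Longrightarrow> (L^^i) q \<noteq> (L^^j) q"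
    and nfix: "\<And>i. Suc i < m \<Longrightarrow> L ((L^^i) q) \<noteq> (L^^i) q"
    and m3: "3 \<le> m"
    and cl: "E ((L^^(m - 1)) q) q"
  shows False
proof -
  let ?xs = "map (\<lambda>i. (L^^i) q) [0..<m]"
  show False
  proof (rule no_cycle_list[of ?xs])
    show "distinct ?xs"
      unfolding distinct_conv_nth
    proof (intro allI impI)
      fix i j assume "i < length ?xs" "j < length ?xs" "i \<noteq> j"
      then show "?xs!i \<noteq> ?xs!j"
        using dist[of i j] dist[of j i] by (cases "i < j") auto
    qed
    show "3 \<le> length ?xs" using m3 by simp
    show "E (?xs!i) (?xs!Suc i)" if "Suc i < length ?xs" for i
    proof -
      have "E ((L^^i) q) (L ((L^^i) q))"
        using lok_E[OF L orb_V[OF L q] nfix] that by simp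
      then show ?thesis using that by simp
    qed
    show "E (last ?xs) (hd ?xs)"
      using cl m3 by (simp add: last_map hd_map)
  qed
qed

lemma LC:
  assumes L: "lok V E L" and q: "q \<in> V" and n: "0 < n" "(L^^n) q = q"
  shows "L q = q"
proof (rule ccontr)
  assume nf: "L q \<noteq> q"
  define m where "m = (LEAST m. 0 < m \<and> (L^^m) q = q)"
  have m: "0 < m \<and> (L^^m) q = q"
    unfolding m_def by (rule LeastI[of _ n]) (use n in auto)
  have mmin: "\<And>k. 0 < k \<Longrightarrow> k < m \<Longrightarrow> (L^^k) q \<noteq> q"
    unfolding m_def using not_less_Least by blast
  have dist: "(L^^i) q \<noteq> (L^^j) q" if ij: "i < j" "j < m" for i j
  proof
    assume eq: "(L^^i) q = (L^^j) q"
    have "(L^^(m - j + i)) q = (L^^(m - j)) ((L^^i) q)" by (rule funpow_app[symmetric])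
    also have "\<dots> = (L^^(m - j)) ((L^^j) q)" using eq by simp
    also have "\<dots> = (L^^m) q" using ij funpow_app[where f=L and a="m - j" and b=j and x=q] by simp
    finally have "(L^^(m - j + i)) q = q" using m by simp
    moreover have "0 < m - j + i" "m - j + i < m" using ij by auto
    ultimately show False using mmin[of "m - j + i"] by simp
  qed
  have nfix: "L ((L^^i) q) \<noteq> (L^^i) q" if "i < m" for i
  proof
    assume fx: "L ((L^^i) q) = (L^^i) q"
    then have "(L^^m) q = (L^^i) q" using fix_stays[where L=L and i=i and j=m and q=q] that by simp
    then have "(L^^i) q = q" using m by simp
    then show False using fx nf by simp
  qed
  have "m \<noteq> 1" using m nf by auto
  moreover have "m \<noteq> 2"
  proof
    assume m2: "m = 2"
    have "L q = (L^^1) q" by simp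
    moreover have "L ((L^^1) q) = q" using m m2 by (simp add: numeral_2_eq_2)
    ultimately have "L q = (L^^1) q \<and> L ((L^^1) q) = q" by simp
    then have "q = (L^^1) q" using L q unfolding lok_def by (metis (no_types))
    then show False using nf by simp
  qed
  ultimately have m3: "3 \<le> m" using m by linarith
  have "E ((L^^(m - 1)) q) (L ((L^^(m - 1)) q))"
    using lok_E[OF L orb_V[OF L q] nfix] m by simp
  moreover have "L ((L^^(m - 1)) q) = q"
  proof -
    have "Suc (m - 1) = m" using m by simp
    then have "(L^^m) q = L ((L^^(m - 1)) q)" by (metis funpow.simps(2) o_apply)
    then show ?thesis using m by simp
  qed
  ultimately have cl: "E ((L^^(m - 1)) q) q" by simp
  show False
  proof (rule orb_dist_cycle[OF L q dist _ m3 cl])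
    show "L ((L^^i) q) \<noteq> (L^^i) q" if "Suc i < m" for i using nfix that by simp
  qed
qed

lemma orb_repeat_fix:
  assumes L: "lok V E L" and q: "q \<in> V" and ij: "i < j" and eq: "(L^^i) q = (L^^j) q"
  shows "L ((L^^i) q) = (L^^i) q"
proof -
  have "(L^^(j - i)) ((L^^i) q) = (L^^j) q"
    using ij by (metis funpow_add comp_apply le_add_diff_inverse2 less_imp_le)
  then show ?thesis using LC[OF L orb_V[OF L q], of "j - i" i] ij eq by simp
qed

lemma F2:
  assumes L: "lok V E L" and xu: "E x u" and nx: "L x \<noteq> u"
  shows "(L^^k) x \<noteq> u"
proof
  assume ku: "(L^^k) x = u"
  have x: "x \<in> V" using EV xu by blast
  define k0 where "k0 = (LEAST k. (L^^k) x = u)"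
  have k0: "(L^^k0) x = u" unfolding k0_def by (rule LeastI[of _ k]) (rule ku)
  have kmin: "\<And>i. i < k0 \<Longrightarrow> (L^^i) x \<noteq> u" unfolding k0_def using not_less_Least by blast
  have "k0 \<noteq> 0" using k0 xu Eirr by (cases k0) auto
  have nfix: "L ((L^^i) x) \<noteq> (L^^i) x" if "i < k0" for i
  proof
    assume "L ((L^^i) x) = (L^^i) x"
    then have "(L^^k0) x = (L^^i) x" using fix_stays[where L=L and i=i and j=k0 and q=x] that by simp
    then have "(L^^i) x = u" using k0 by simp
    then show False using kmin[OF that] by simp
  qed
  have "k0 \<noteq> 1" using k0 nx by auto
  then have k2: "2 \<le> k0" using \<open>k0 \<noteq> 0\<close> by linarith
  show False
  proof (rule orb_dist_cycle[OF L x, of "Suc k0"])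
    show "(L^^i) x \<noteq> (L^^j) x" if "i < j" "j < Suc k0" for i j
    proof
      assume "(L^^i) x = (L^^j) x"
      then have "L ((L^^i) x) = (L^^i) x" by (rule orb_repeat_fix[OF L x that(1)])
      moreover have "i < k0" using that by simp
      ultimately show False using nfix by blast
    qed
    show "L ((L^^i) x) \<noteq> (L^^i) x" if "Suc i < Suc k0" for i
      using nfix that by simp
    show "3 \<le> Suc k0" using k2 by simp
    show "E ((L^^(Suc k0 - 1)) x) x" using k0 Esym xu by simp
  qed
qed


lemma FP:
  assumes L: "lok V E L" and q: "q \<in> V"
  shows "L ((L^^card V) q) = (L^^card V) q"
proof (rule ccontr)
  assume nf: "L ((L^^card V) q) \<noteq> (L^^card V) q"
  let ?N = "card V"
  have nfix: "L ((L^^i) q) \<noteq> (L^^i) q" if "i \<le> ?N" for i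
  proof
    assume "L ((L^^i) q) = (L^^i) q"
    then have "(L^^?N) q = (L^^i) q" using fix_stays[where L=L and i=i and j="?N" and q=q] that by simp
    then show False using nf \<open>L ((L^^i) q) = (L^^i) q\<close> by simp
  qed
  have inj: "inj_on (\<lambda>i. (L^^i) q) {0..?N}"
  proof (rule inj_onI)
    fix i j assume i: "i \<in> {0..?N}" and j: "j \<in> {0..?N}" and eq: "(L^^i) q = (L^^j) q"
    show "i = j"
    proof (rule ccontr)
      assume "i \<noteq> j"
      then consider "i < j" | "j < i" by linarith
      then show False
      proof cases
        case 1
        then have "L ((L^^i) q) = (L^^i) q" using orb_repeat_fix[OF L q 1 eq] by simp
        then show False using nfix i by simp
      next
        case 2
        then have "L ((L^^j) q) = (L^^j) q" using orb_repeat_fix[OF L q 2 eq[symmetric]] by simp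
        then show False using nfix j by simp
      qed
    qed
  qed
  have "(\<lambda>i. (L^^i) q) ` {0..?N} \<subseteq> V" using orb_V[OF L q] by auto
  then have "card ((\<lambda>i. (L^^i) q) ` {0..?N}) \<le> ?N" using finV by (simp add: card_mono)
  moreover have "card ((\<lambda>i. (L^^i) q) ` {0..?N}) = Suc ?N" using card_image[OF inj] by simp
  ultimately show False by simp
qed

lemma sink_V: "lok V E L \<Longrightarrow> q \<in> V \<Longrightarrow> sinkf V L q \<in> V"
  unfolding sinkf_def by (rule orb_V)

lemma sink_fix: "lok V E L \<Longrightarrow> q \<in> V \<Longrightarrow> L (sinkf V L q) = sinkf V L q"
  unfolding sinkf_def by (rule FP)

lemma sink_step: "lok V E L \<Longrightarrow> q \<in> V \<Longrightarrow> sinkf V L (L q) = sinkf V L q"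
  unfolding sinkf_def using FP by (metis funpow_swap1)

lemma sink_iter: "lok V E L \<Longrightarrow> q \<in> V \<Longrightarrow> sinkf V L ((L^^k) q) = sinkf V L q"
proof (induction k)
  case 0 then show ?case by simp
next
  case (Suc k)
  have "sinkf V L ((L^^Suc k) q) = sinkf V L (L ((L^^k) q))" by simp
  also have "\<dots> = sinkf V L ((L^^k) q)" using sink_step orb_V Suc.prems by blast
  finally show ?case using Suc by simp
qed

lemma sink_self: "L q = q \<Longrightarrow> sinkf V L q = q"
  unfolding sinkf_def by (rule funpow_fix)

lemma sink_avoid:
  assumes "\<And>k. (L^^k) q \<noteq> u"
  shows "sinkf V (L(u := v)) q = sinkf V L q"
proof -
  have "((L(u := v))^^k) q = (L^^k) q" for k
  proof (induction k)
    case 0 then show ?case by simp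
  next
    case (Suc k) then show ?case using assms[of k] by simp
  qed
  then show ?thesis by (simp add: sinkf_def)
qed

lemma sink_through:
  assumes L': "lok V E (L(u := v))" and q: "q \<in> V" and k: "(L^^k) q = u"
  shows "sinkf V (L(u := v)) q = sinkf V (L(u := v)) u"
proof -
  define k0 where "k0 = (LEAST k. (L^^k) q = u)"
  have k0: "(L^^k0) q = u" unfolding k0_def by (rule LeastI[of _ k]) (rule k)
  have kmin: "\<And>i. i < k0 \<Longrightarrow> (L^^i) q \<noteq> u" unfolding k0_def using not_less_Least by blast
  have "i \<le> k0 \<Longrightarrow> ((L(u := v))^^i) q = (L^^i) q" for i
  proof (induction i)
    case 0 then show ?case by simp
  next
    case (Suc i)
    then have "(L^^i) q \<noteq> u" using kmin by simp
    then show ?case using Suc by simp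
  qed
  then have "((L(u := v))^^k0) q = u" using k0 by simp
  then show ?thesis using sink_iter[OF L' q, of k0] by simp
qed


lemma walk_map:
  assumes "0 < n" "\<And>i. Suc i < n \<Longrightarrow> E (f i) (f (Suc i))"
  shows "is_walk E (map f [0..<n])"
  using assms unfolding is_walk_def by auto

lemma is_walk_append:
  assumes "is_walk E xs" "is_walk E ys" "E (last xs) (hd ys)"
  shows "is_walk E (xs @ ys)"
  unfolding is_walk_def
proof (intro conjI allI impI)
  show "xs @ ys \<noteq> []" using assms by (auto simp: is_walk_def)
  fix i assume i: "Suc i < length (xs @ ys)"
  have xs: "xs \<noteq> []" "\<And>i. Suc i < length xs \<Longrightarrow> E (xs!i) (xs!Suc i)" using assms(1) by (auto simp: is_walk_def)
  have ys: "ys \<noteq> []" "\<And>i. Suc i < length ys \<Longrightarrow> E (ys!i) (ys!Suc i)" using assms(2) by (auto simp: is_walk_def)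
  consider "Suc i < length xs" | "Suc i = length xs" | "Suc i > length xs" by linarith
  then show "E ((xs @ ys)!i) ((xs @ ys)!Suc i)"
  proof cases
    case 1 then show ?thesis using xs by (simp add: nth_append)
  next
    case 2
    then have ii: "i = length xs - 1" by simp
    then have "(xs @ ys)!i = last xs" using xs 2 by (simp add: nth_append last_conv_nth)
    moreover have "(xs @ ys)!Suc i = hd ys" using 2 ys by (simp add: nth_append hd_conv_nth)
    ultimately show ?thesis using assms(3) by simp
  next
    case 3
    then have "Suc (i - length xs) < length ys" using i by simp
    then have "E (ys!(i - length xs)) (ys!Suc (i - length xs))" using ys by blast
    moreover have "Suc i - length xs = Suc (i - length xs)" using 3 by simp
    ultimately show ?thesis using 3 by (simp add: nth_append)
  qed
qed

lemma F3:
  assumes L: "lok V E L" and xy: "E x y" and nx: "L x \<noteq> y" and ny: "L y \<noteq> x"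
  shows "sinkf V L x \<noteq> sinkf V L y"
proof
  assume eqs: "sinkf V L x = sinkf V L y"
  have x: "x \<in> V" and y: "y \<in> V" using EV xy by auto
  let ?N = "card V"
  let ?ox = "\<lambda>i. (L^^i) x" and ?oy = "\<lambda>j. (L^^j) y"
  define B where "B = ?oy ` {0..?N}"
  have NB: "?ox ?N \<in> B" using eqs unfolding B_def sinkf_def by auto
  define i0 where "i0 = (LEAST i. ?ox i \<in> B)"
  have i0B: "?ox i0 \<in> B" unfolding i0_def by (rule LeastI[of _ ?N]) (rule NB)
  have i0min: "\<And>i. i < i0 \<Longrightarrow> ?ox i \<notin> B" unfolding i0_def using not_less_Least by blast
  have i0N: "i0 \<le> ?N" unfolding i0_def by (rule Least_le) (rule NB)
  obtain jj where "?oy jj = ?ox i0" using i0B unfolding B_def by auto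
  define j0 where "j0 = (LEAST j. ?oy j = ?ox i0)"
  have j0: "?oy j0 = ?ox i0" unfolding j0_def by (rule LeastI[of _ jj]) (rule \<open>?oy jj = ?ox i0\<close>)
  have j0min: "\<And>j. j < j0 \<Longrightarrow> ?oy j \<noteq> ?ox i0" unfolding j0_def using not_less_Least by blast
  have xnf: "L (?ox i) \<noteq> ?ox i" if "i < i0" for i
  proof
    assume "L (?ox i) = ?ox i"
    then have "?ox ?N = ?ox i" using fix_stays[where L=L and i=i and j="?N" and q=x] that i0N by simp
    then show False using NB i0min[OF that] by simp
  qed
  have ynf: "L (?oy j) \<noteq> ?oy j" if "j < j0" for j
  proof
    assume "L (?oy j) = ?oy j"
    then have "?oy j0 = ?oy j" using fix_stays[where L=L and i=j and j=j0 and q=y] that by simp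
    then show False using j0 j0min[OF that] by simp
  qed
  have xdist: "?ox i \<noteq> ?ox i'" if "i < i'" "i' \<le> i0" for i i'
  proof
    assume "?ox i = ?ox i'"
    then have "L (?ox i) = ?ox i" using orb_repeat_fix[OF L x that(1)] by simp
    then show False using xnf that by simp
  qed
  have ydist: "?oy j \<noteq> ?oy j'" if "j < j'" "j' < j0" for j j'
  proof
    assume "?oy j = ?oy j'"
    then have "L (?oy j) = ?oy j" using orb_repeat_fix[OF L y that(1)] by simp
    then show False using ynf that by simp
  qed
  have ynotx: "?oy j \<noteq> ?ox i" if "j < j0" "i \<le> i0" for i j
  proof (cases "i = i0")
    case True then show ?thesis using j0min that by simp
  next
    case False
    then have "i < i0" using that by simp
    moreover have "j \<le> ?N"
    proof (rule ccontr)
      assume "\<not> j \<le> ?N"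
      then have "?oy j = ?oy ?N" using fix_stays[where L=L and i="?N" and j=j and q=y] FP[OF L y] by simp
      then have "L (?oy j) = ?oy j" using FP[OF L y] by simp
      then show False using ynf that by simp
    qed
    then have "?oy j \<in> B" unfolding B_def by auto
    then show ?thesis using i0min[OF \<open>i < i0\<close>] by auto
  qed
  let ?xs = "map ?ox [0..<Suc i0]" and ?ys = "rev (map ?oy [0..<j0])"
  have "x \<noteq> y" using xy Eirr by auto
  have i0pos: "i0 \<noteq> 0 \<or> 2 \<le> j0"
  proof (rule ccontr)
    assume "\<not> (i0 \<noteq> 0 \<or> 2 \<le> j0)"
    then have "i0 = 0" "j0 < 2" by auto
    then have "j0 = 0 \<or> j0 = 1" by auto
    then show False
    proof
      assume "j0 = 0" then show False using j0 \<open>i0 = 0\<close> \<open>x \<noteq> y\<close> by simp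
    next
      assume "j0 = 1" then show False using j0 \<open>i0 = 0\<close> ny by simp
    qed
  qed
  have j0pos: "j0 \<noteq> 0 \<or> 2 \<le> i0"
  proof (rule ccontr)
    assume "\<not> (j0 \<noteq> 0 \<or> 2 \<le> i0)"
    then have "j0 = 0" "i0 < 2" by auto
    then have "i0 = 0 \<or> i0 = 1" by auto
    then show False
    proof
      assume "i0 = 0" then show False using j0 \<open>j0 = 0\<close> \<open>x \<noteq> y\<close> by simp
    next
      assume "i0 = 1" then show False using j0 \<open>j0 = 0\<close> nx by simp
    qed
  qed
  show False
  proof (rule no_cycle_list[of "?xs @ ?ys"])
    have d1: "distinct ?xs"
      unfolding distinct_conv_nth
    proof (intro allI impI)
      fix i j assume "i < length ?xs" "j < length ?xs" "i \<noteq> j"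
      then show "?xs!i \<noteq> ?xs!j"
        using xdist[of i j] xdist[of j i] by (cases "i < j") (auto simp del: upt_Suc)
    qed
    have d2': "distinct (map ?oy [0..<j0])"
      unfolding distinct_conv_nth
    proof (intro allI impI)
      fix i j assume "i < length (map ?oy [0..<j0])" "j < length (map ?oy [0..<j0])" "i \<noteq> j"
      then show "map ?oy [0..<j0]!i \<noteq> map ?oy [0..<j0]!j"
        using ydist[of i j] ydist[of j i] by (cases "i < j") auto
    qed
    then have d2: "distinct ?ys" by simp
    have d3: "set ?xs \<inter> set ?ys = {}"
    proof (rule ccontr)
      assume "set ?xs \<inter> set ?ys \<noteq> {}"
      then obtain i j where "i < Suc i0" "j < j0" "?ox i = ?oy j" by (auto simp del: upt_Suc)
      then show False using ynotx[of j i] by simp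
    qed
    show "distinct (?xs @ ?ys)" using d1 d2 d3 by simp
    show "3 \<le> length (?xs @ ?ys)" using i0pos j0pos by auto
    show "E ((?xs @ ?ys)!i) ((?xs @ ?ys)!Suc i)" if "Suc i < length (?xs @ ?ys)" for i
    proof -
      have w1: "is_walk E ?xs"
      proof (rule walk_map)
        show "E (?ox i) (?ox (Suc i))" if "Suc i < Suc i0" for i
          using lok_E[OF L orb_V[OF L x] xnf, of i] that by simp
      qed simp
      have "is_walk E (?xs @ ?ys)"
      proof (cases "j0 = 0")
        case True then show ?thesis using w1 by simp
      next
        case False
        have w2: "is_walk E (map ?oy [0..<j0])"
        proof (rule walk_map)
          show "E (?oy i) (?oy (Suc i))" if "Suc i < j0" for i
            using lok_E[OF L orb_V[OF L y] ynf, of i] that by simp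
        qed (use False in simp)
        have "E (?oy (j0 - 1)) (L (?oy (j0 - 1)))"
          using lok_E[OF L orb_V[OF L y] ynf, of "j0 - 1"] False by simp
        moreover have "L (?oy (j0 - 1)) = ?oy j0"
          using False by (metis Suc_pred' bot_nat_0.not_eq_extremum funpow.simps(2) o_apply)
        ultimately have "E (?ox i0) (?oy (j0 - 1))" using j0 Esym by simp
        then have "E (last ?xs) (hd ?ys)" using False by (simp add: hd_rev last_map)
        then show ?thesis using w1 walk_rev[OF w2] by (intro is_walk_append) auto
      qed
      then show ?thesis using that by (simp add: is_walk_def)
    qed
    show "E (last (?xs @ ?ys)) (hd (?xs @ ?ys))"
    proof (cases "j0 = 0")
      case True
      then have "last (?xs @ ?ys) = y" using j0 by simp
      moreover have "hd (?xs @ ?ys) = x" by (simp del: upt_Suc add: hd_map)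
      ultimately show ?thesis using xy Esym by simp
    next
      case False
      then have "last (?xs @ ?ys) = y" by (simp add: last_rev hd_map)
      moreover have "hd (?xs @ ?ys) = x" by (simp del: upt_Suc add: hd_map)
      ultimately show ?thesis using xy Esym by simp
    qed
  qed
qed

end

lemma issue_clk: "clk (step node time s (Issue r)) = time r" by (simp add: Let_def)
lemma issue_lst: "lst (step node time s (Issue r)) = (lst s)(node r := r)" by (simp add: Let_def)
lemma issue_iss: "iss (step node time s (Issue r)) = insert r (iss s)" by (simp add: Let_def)
lemma issue_vis: "vis (step node time s (Issue r)) = (vis s)(r := (vis s r)(node r := Some (time r)))"
  by (simp add: Let_def)
lemma issue_lnk: "lnk (step node time s (Issue r)) =
    (if lnk s (node r) = node r then lnk s else (lnk s)(node r := node r))"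
  by (simp add: Let_def)
lemma issue_trans: "trans (step node time s (Issue r)) = (if lnk s (node r) = node r then trans s
       else insert (r, node r, lnk s (node r), time r) (trans s))"
  by (simp add: Let_def)
lemma issue_prd: "prd (step node time s (Issue r)) =
    (if lnk s (node r) = node r then (prd s)(r := Some (lst s (node r))) else prd s)"
  by (simp add: Let_def)

lemma deliver_clk: "clk (step node time s (Deliver (r, x, u, \<sigma>) \<tau>)) = \<tau>" by (simp add: Let_def)
lemma deliver_lst: "lst (step node time s (Deliver (r, x, u, \<sigma>) \<tau>)) = lst s" by (simp add: Let_def)
lemma deliver_iss: "iss (step node time s (Deliver (r, x, u, \<sigma>) \<tau>)) = iss s" by (simp add: Let_def)
lemma deliver_vis: "vis (step node time s (Deliver (r, x, u, \<sigma>) \<tau>)) = (vis s)(r := (vis s r)(u := Some \<tau>))"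
  by (simp add: Let_def)
lemma deliver_lnk: "lnk (step node time s (Deliver (r, x, u, \<sigma>) \<tau>)) = (lnk s)(u := x)"
  by (simp add: Let_def)
lemma deliver_trans: "trans (step node time s (Deliver (r, x, u, \<sigma>) \<tau>)) = (if lnk s u = u then trans s - {(r, x, u, \<sigma>)}
       else insert (r, u, lnk s u, \<tau>) (trans s - {(r, x, u, \<sigma>)}))"
  by (simp add: Let_def)
lemma deliver_prd: "prd (step node time s (Deliver (r, x, u, \<sigma>) \<tau>)) =
    (if lnk s u = u then (prd s)(r := Some (lst s u)) else prd s)"
  by (simp add: Let_def)

locale arrowctx = wtree V E w
  for V :: "'v set" and E and w +
  fixes R :: "'r set" and r0 :: 'r and node :: "'r \<Rightarrow> 'v" and time :: "'r \<Rightarrow> real"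
    and lnk0 :: "'v \<Rightarrow> 'v"
  assumes areq: "arrow_requests V R r0 node time"
    and ilinks: "initial_links V E w (node r0) lnk0"
begin

lemma finR: "finite R" using areq by (simp add: arrow_requests_def)
lemma r0R: "r0 \<in> R" using areq by (simp add: arrow_requests_def)
lemma time0: "time r0 = 0" using areq by (simp add: arrow_requests_def)
lemma nodeV: "r \<in> R \<Longrightarrow> node r \<in> V" using areq by (simp add: arrow_requests_def)
lemma time_nn: "r \<in> R \<Longrightarrow> 0 \<le> time r" using areq by (simp add: arrow_requests_def)

abbreviation "v0 \<equiv> node r0"
lemma v0V: "v0 \<in> V" using nodeV r0R by blast

definition inv_msg :: "('v, 'r) arrow_state \<Rightarrow> bool" where
  "inv_msg s \<longleftrightarrow> (\<forall>r x y \<sigma>. (r, x, y, \<sigma>) \<in> trans s \<longrightarrow>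
     E x y \<and> lnk s x \<noteq> y \<and> lnk s y \<noteq> x \<and> r \<in> iss s \<and> prd s r = None \<and> \<sigma> \<le> clk s)"

definition inv_uniq :: "('v, 'r) arrow_state \<Rightarrow> bool" where
  "inv_uniq s \<longleftrightarrow> (\<forall>r x y \<sigma> r' x' y' \<sigma>'. (r, x, y, \<sigma>) \<in> trans s \<longrightarrow> (r', x', y', \<sigma>') \<in> trans s \<longrightarrow>
     (r = r' \<or> (x = x' \<and> y = y') \<or> (x = y' \<and> y = x')) \<longrightarrow> r = r' \<and> x = x' \<and> y = y' \<and> \<sigma> = \<sigma>')"

definition inv_cov :: "('v, 'r) arrow_state \<Rightarrow> bool" where
  "inv_cov s \<longleftrightarrow> (\<forall>x y. E x y \<longrightarrow> lnk s x = y \<or> lnk s y = x \<or>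
     (\<exists>r \<sigma>. (r, x, y, \<sigma>) \<in> trans s) \<or> (\<exists>r \<sigma>. (r, y, x, \<sigma>) \<in> trans s))"

definition inv_lst :: "('v, 'r) arrow_state \<Rightarrow> bool" where
  "inv_lst s \<longleftrightarrow> (\<forall>z\<in>V. (lnk s z = z \<longrightarrow> node (lst s z) = z) \<and> (lst s z \<in> iss s \<or> lst s z = r0))"

definition inv_misc :: "('v, 'r) arrow_state \<Rightarrow> bool" where
  "inv_misc s \<longleftrightarrow> iss s \<subseteq> R - {r0} \<and> (\<forall>c a. prd s c = Some a \<longrightarrow> c \<in> iss s) \<and>
     (\<forall>r u. vis s r u \<noteq> None \<longrightarrow> u \<in> V) \<and> (\<forall>c p. prd s c = Some p \<longrightarrow> vis s c (node p) \<noteq> None)"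

definition InvA :: "('v, 'r) arrow_state \<Rightarrow> bool" where
  "InvA s \<longleftrightarrow> lok V E (lnk s) \<and> inv_msg s \<and> inv_uniq s \<and> inv_cov s \<and> inv_lst s \<and> inv_misc s"

lemma ilinks_root: "lnk0 v0 = v0" using ilinks by (simp add: initial_links_def)
lemma ilinks_E: "u \<in> V \<Longrightarrow> u \<noteq> v0 \<Longrightarrow> E u (lnk0 u)" using ilinks by (simp add: initial_links_def)
lemma ilinks_d: "u \<in> V \<Longrightarrow> u \<noteq> v0 \<Longrightarrow> tree_dist E w u v0 = w u (lnk0 u) + tree_dist E w (lnk0 u) v0"
  using ilinks by (simp add: initial_links_def)

lemma lok0: "lok V E lnk0"
  unfolding lok_def
proof (intro conjI ballI allI impI)
  fix x assume x: "x \<in> V"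
  show "lnk0 x \<in> V" using x ilinks_root ilinks_E[OF x] EV v0V by (cases "x = v0") auto
  show "E x (lnk0 x)" if "lnk0 x \<noteq> x" using that x ilinks_root ilinks_E[OF x] by (cases "x = v0") auto
  fix y assume xy: "lnk0 x = y \<and> lnk0 y = x"
  show "x = y"
  proof (rule ccontr)
    assume ne: "x \<noteq> y"
    then have "x \<noteq> v0" using xy ilinks_root by auto
    have "y \<noteq> v0" using ne xy ilinks_root by auto
    have Exy: "E x y" using ilinks_E[OF x \<open>x \<noteq> v0\<close>] xy by simp
    then have y: "y \<in> V" using EV by blast
    have "tree_dist E w x v0 = w x y + tree_dist E w y v0" using ilinks_d[OF x \<open>x \<noteq> v0\<close>] xy by simp
    moreover have "tree_dist E w y v0 = w y x + tree_dist E w x v0" using ilinks_d[OF y \<open>y \<noteq> v0\<close>] xy by simp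
    ultimately have "w x y + w y x = 0" by simp
    moreover have "0 < w x y" "0 < w y x" using Exy wpos Esym by auto
    ultimately show False by simp
  qed
qed

lemma sink0: "q \<in> V \<Longrightarrow> sinkf V lnk0 q = v0"
proof -
  assume q: "q \<in> V"
  have "sinkf V lnk0 q \<in> V" "lnk0 (sinkf V lnk0 q) = sinkf V lnk0 q"
    using sink_V[OF lok0 q] sink_fix[OF lok0 q] by auto
  then show ?thesis using ilinks_E Eirr by (metis)
qed

lemma InvA_init: "InvA (init_state lnk0 r0)"
  unfolding InvA_def
proof (intro conjI)
  show "lok V E (lnk (init_state lnk0 r0))" using lok0 by (simp add: init_state_def)
  show "inv_msg (init_state lnk0 r0)" by (simp add: init_state_def inv_msg_def)
  show "inv_uniq (init_state lnk0 r0)" by (simp add: init_state_def inv_uniq_def)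
  show "inv_cov (init_state lnk0 r0)"
    unfolding inv_cov_def init_state_def
  proof (simp, intro allI impI)
    fix x y assume xy: "E x y"
    have "x \<in> V" "y \<in> V" using EV xy by auto
    then have "sinkf V lnk0 x = sinkf V lnk0 y" using sink0 by simp
    then show "lnk0 x = y \<or> lnk0 y = x" using F3[OF lok0 xy] by blast
  qed
  show "inv_lst (init_state lnk0 r0)"
    unfolding inv_lst_def init_state_def
    using ilinks_E Eirr by (simp) (metis)
  show "inv_misc (init_state lnk0 r0)" by (simp add: init_state_def inv_misc_def)
qed


lemma IA_lok: "InvA s \<Longrightarrow> lok V E (lnk s)" by (simp add: InvA_def)
lemma IA_msg: "InvA s \<Longrightarrow> (r, x, y, \<sigma>) \<in> trans s \<Longrightarrow>
     E x y \<and> lnk s x \<noteq> y \<and> lnk s y \<noteq> x \<and> r \<in> iss s \<and> prd s r = None \<and> \<sigma> \<le> clk s"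
  unfolding InvA_def inv_msg_def by blast
lemma IA_uniq: "InvA s \<Longrightarrow> (r, x, y, \<sigma>) \<in> trans s \<Longrightarrow> (r', x', y', \<sigma>') \<in> trans s \<Longrightarrow>
     r = r' \<or> (x = x' \<and> y = y') \<or> (x = y' \<and> y = x') \<Longrightarrow> r = r' \<and> x = x' \<and> y = y' \<and> \<sigma> = \<sigma>'"
  unfolding InvA_def inv_uniq_def by blast
lemma IA_cov: "InvA s \<Longrightarrow> E x y \<Longrightarrow> lnk s x = y \<or> lnk s y = x \<or>
     (\<exists>r \<sigma>. (r, x, y, \<sigma>) \<in> trans s) \<or> (\<exists>r \<sigma>. (r, y, x, \<sigma>) \<in> trans s)"
  unfolding InvA_def inv_cov_def by blast
lemma IA_lst: "InvA s \<Longrightarrow> z \<in> V \<Longrightarrow> lnk s z = z \<Longrightarrow> node (lst s z) = z"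
  unfolding InvA_def inv_lst_def by blast
lemma IA_lst2: "InvA s \<Longrightarrow> z \<in> V \<Longrightarrow> lst s z \<in> iss s \<or> lst s z = r0"
  unfolding InvA_def inv_lst_def by blast
lemma IA_iss: "InvA s \<Longrightarrow> iss s \<subseteq> R - {r0}"
  unfolding InvA_def inv_misc_def by blast
lemma IA_prd: "InvA s \<Longrightarrow> prd s c = Some a \<Longrightarrow> c \<in> iss s"
  unfolding InvA_def inv_misc_def by blast
lemma IA_vis: "InvA s \<Longrightarrow> vis s r u \<noteq> None \<Longrightarrow> u \<in> V"
  unfolding InvA_def inv_misc_def by blast
lemma IA_pv: "InvA s \<Longrightarrow> prd s c = Some p \<Longrightarrow> vis s c (node p) \<noteq> None"
  unfolding InvA_def inv_misc_def by blast
lemma IA_prd_none: "InvA s \<Longrightarrow> c \<notin> iss s \<Longrightarrow> prd s c = None"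
  using IA_prd by (cases "prd s c") auto

lemma step_issue_self:
  assumes I: "InvA s" and en: "enabled w R r0 time s (Issue r)" and self: "lnk s (node r) = node r"
  shows "InvA (step node time s (Issue r))"
proof -
  let ?v = "node r" and ?s' = "step node time s (Issue r)"
  have r: "r \<in> R" "r \<noteq> r0" "r \<notin> iss s" "clk s \<le> time r" using en by auto
  have v: "?v \<in> V" using nodeV r by simp
  have lnk': "lnk ?s' = lnk s" and trans': "trans ?s' = trans s"
    and prd': "prd ?s' = (prd s)(r := Some (lst s ?v))" and lst': "lst ?s' = (lst s)(?v := r)"
    and iss': "iss ?s' = insert r (iss s)" and clk': "clk ?s' = time r"
    and vis': "vis ?s' = (vis s)(r := (vis s r)(?v := Some (time r)))"
    by (simp_all only: issue_lnk issue_trans issue_prd issue_lst issue_iss issue_clk issue_vis if_P[OF self])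
  have prdr: "prd s r = None" using IA_prd_none[OF I r(3)] .
  have nomsg: "(r, x, y, \<sigma>) \<notin> trans s" for x y \<sigma> using IA_msg[OF I] r(3) by blast
  show ?thesis
    unfolding InvA_def
  proof (intro conjI)
    show "lok V E (lnk ?s')" using IA_lok[OF I] lnk' by simp
    show "inv_msg ?s'"
      unfolding inv_msg_def lnk' trans' prd' iss' clk'
    proof (intro allI impI)
      fix r' x y \<sigma> assume m: "(r', x, y, \<sigma>) \<in> trans s"
      then have "r' \<noteq> r" using nomsg by blast
      then show "E x y \<and> lnk s x \<noteq> y \<and> lnk s y \<noteq> x \<and> r' \<in> insert r (iss s) \<and>
          ((prd s)(r := Some (lst s ?v))) r' = None \<and> \<sigma> \<le> time r"
        using IA_msg[OF I m] r(4) by auto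
    qed
    show "inv_uniq ?s'" using I unfolding InvA_def inv_uniq_def trans' by blast
    show "inv_cov ?s'" using I unfolding InvA_def inv_cov_def trans' lnk' by blast
    show "inv_lst ?s'"
      unfolding inv_lst_def lnk' lst' iss'
    proof (intro ballI conjI impI)
      fix z assume z: "z \<in> V"
      show "node (((lst s)(?v := r)) z) = z" if "lnk s z = z"
        using IA_lst[OF I z that] by (cases "z = ?v") auto
      show "((lst s)(?v := r)) z \<in> insert r (iss s) \<or> ((lst s)(?v := r)) z = r0"
        using IA_lst2[OF I z] by (cases "z = ?v") auto
    qed
    show "inv_misc ?s'"
      unfolding inv_misc_def prd' iss' vis'
    proof (intro conjI allI impI)
      show "insert r (iss s) \<subseteq> R - {r0}" using IA_iss[OF I] r by auto
      fix c a assume "((prd s)(r := Some (lst s ?v))) c = Some a"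
      then show "c \<in> insert r (iss s)" using IA_prd[OF I] by (cases "c = r") auto
    next
      fix r' u assume "((vis s)(r := (vis s r)(?v := Some (time r)))) r' u \<noteq> None"
      then show "u \<in> V" using IA_vis[OF I] v by (cases "r' = r"; cases "u = ?v") auto
    next
      fix c p assume cp: "((prd s)(r := Some (lst s ?v))) c = Some p"
      show "((vis s)(r := (vis s r)(?v := Some (time r)))) c (node p) \<noteq> None"
      proof (cases "c = r")
        case True
        then have "p = lst s ?v" using cp by simp
        then have "node p = ?v" using IA_lst[OF I v self] by simp
        then show ?thesis using True by simp
      next
        case False
        then show ?thesis using cp IA_pv[OF I] by simp
      qed
    qed
  qed
qed

lemma step_issue_other:
  assumes I: "InvA s" and en: "enabled w R r0 time s (Issue r)" and ns: "lnk s (node r) \<noteq> node r"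
  shows "InvA (step node time s (Issue r))"
proof -
  let ?v = "node r" and ?s' = "step node time s (Issue r)"
  let ?p = "lnk s ?v"
  have r: "r \<in> R" "r \<noteq> r0" "r \<notin> iss s" "clk s \<le> time r" using en by auto
  have v: "?v \<in> V" using nodeV r by simp
  have lnk': "lnk ?s' = (lnk s)(?v := ?v)" and trans': "trans ?s' = insert (r, ?v, ?p, time r) (trans s)"
    and prd': "prd ?s' = prd s" and lst': "lst ?s' = (lst s)(?v := r)"
    and iss': "iss ?s' = insert r (iss s)" and clk': "clk ?s' = time r"
    and vis': "vis ?s' = (vis s)(r := (vis s r)(?v := Some (time r)))"
    by (simp_all only: issue_lnk issue_trans issue_prd issue_lst issue_iss issue_clk issue_vis if_not_P[OF ns])
  have L: "lok V E (lnk s)" using IA_lok[OF I] .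
  have Evp: "E ?v ?p" using lok_E[OF L v ns] .
  have pv: "lnk s ?p \<noteq> ?v" using L v ns unfolding lok_def by metis
  have prdr: "prd s r = None" using IA_prd_none[OF I r(3)] .
  have nomsg: "(r, x, y, \<sigma>) \<notin> trans s" for x y \<sigma> using IA_msg[OF I] r(3) by blast
  show ?thesis
    unfolding InvA_def
  proof (intro conjI)
    show "lok V E (lnk ?s')"
      unfolding lnk' lok_def
    proof (intro conjI ballI allI impI)
      fix x assume x: "x \<in> V"
      show "((lnk s)(?v := ?v)) x \<in> V" using L x v unfolding lok_def by auto
      show "E x (((lnk s)(?v := ?v)) x)" if "((lnk s)(?v := ?v)) x \<noteq> x"
        using that lok_E[OF L x] by (cases "x = ?v") auto
      fix y assume "((lnk s)(?v := ?v)) x = y \<and> ((lnk s)(?v := ?v)) y = x"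
      then have h1: "((lnk s)(?v := ?v)) x = y" and h2: "((lnk s)(?v := ?v)) y = x" by auto
      show "x = y"
      proof (cases "x = ?v")
        case True then show ?thesis using h1 by simp
      next
        case False
        show ?thesis
        proof (cases "y = ?v")
          case True then show ?thesis using h2 by simp
        next
          case False
          then have "lnk s x = y" "lnk s y = x" using h1 h2 \<open>x \<noteq> ?v\<close> by auto
          then show ?thesis using L x unfolding lok_def by blast
        qed
      qed
    qed
    show "inv_msg ?s'"
      unfolding inv_msg_def lnk' trans' prd' iss' clk'
    proof (intro allI impI)
      fix r' x y \<sigma> assume m: "(r', x, y, \<sigma>) \<in> insert (r, ?v, ?p, time r) (trans s)"
      show "E x y \<and> ((lnk s)(?v := ?v)) x \<noteq> y \<and> ((lnk s)(?v := ?v)) y \<noteq> x \<and>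
          r' \<in> insert r (iss s) \<and> prd s r' = None \<and> \<sigma> \<le> time r"
      proof (cases "(r', x, y, \<sigma>) = (r, ?v, ?p, time r)")
        case True
        then show ?thesis using Evp pv prdr Eirr by auto
      next
        case False
        then have m': "(r', x, y, \<sigma>) \<in> trans s" using m by (simp only: insert_iff) blast
        note M = IA_msg[OF I m']
        have "x \<noteq> y" using M Eirr by metis
        then show ?thesis using M r(4) by auto
      qed
    qed
    show "inv_uniq ?s'"
      unfolding inv_uniq_def trans'
    proof (intro allI impI)
      fix r1 x1 y1 s1 r2 x2 y2 s2
      assume m1: "(r1, x1, y1, s1) \<in> insert (r, ?v, ?p, time r) (trans s)"
        and m2: "(r2, x2, y2, s2) \<in> insert (r, ?v, ?p, time r) (trans s)"
        and c: "r1 = r2 \<or> (x1 = x2 \<and> y1 = y2) \<or> (x1 = y2 \<and> y1 = x2)"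
      have new_old: False if "(r', x', y', s'') \<in> trans s" "r = r' \<or> (?v = x' \<and> ?p = y') \<or> (?v = y' \<and> ?p = x')"
        for r' x' y' s''
        using IA_msg[OF I that(1)] that(2) nomsg[of x' y' s''] that(1) by auto
      consider "(r1, x1, y1, s1) = (r, ?v, ?p, time r)" | "(r1, x1, y1, s1) \<in> trans s" using m1 by blast
      then show "r1 = r2 \<and> x1 = x2 \<and> y1 = y2 \<and> s1 = s2"
      proof cases
        case 1
        consider "(r2, x2, y2, s2) = (r, ?v, ?p, time r)" | "(r2, x2, y2, s2) \<in> trans s" using m2 by blast
        then show ?thesis
        proof cases
          case 1 then show ?thesis using \<open>(r1, x1, y1, s1) = (r, ?v, ?p, time r)\<close> by simp
        next
          case 2
          have "r = r2 \<or> (?v = x2 \<and> ?p = y2) \<or> (?v = y2 \<and> ?p = x2)" using c 1 by auto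
          then show ?thesis using new_old[OF 2] by blast
        qed
      next
        case 2
        note o2 = this
        consider "(r2, x2, y2, s2) = (r, ?v, ?p, time r)" | "(r2, x2, y2, s2) \<in> trans s" using m2 by blast
        then show ?thesis
        proof cases
          case 1
          have "r = r1 \<or> (?v = x1 \<and> ?p = y1) \<or> (?v = y1 \<and> ?p = x1)" using c 1 by auto
          then show ?thesis using new_old[OF o2] by blast
        next
          case 2
          show ?thesis using IA_uniq[OF I o2 2 c] .
        qed
      qed
    qed
    show "inv_cov ?s'"
      unfolding inv_cov_def trans' lnk'
    proof (intro allI impI)
      fix x y assume xy: "E x y"
      show "((lnk s)(?v := ?v)) x = y \<or> ((lnk s)(?v := ?v)) y = x \<or>
          (\<exists>r' \<sigma>. (r', x, y, \<sigma>) \<in> insert (r, ?v, ?p, time r) (trans s)) \<or>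
          (\<exists>r' \<sigma>. (r', y, x, \<sigma>) \<in> insert (r, ?v, ?p, time r) (trans s))"
        using IA_cov[OF I xy] by (cases "x = ?v"; cases "y = ?v") auto
    qed
    show "inv_lst ?s'"
      unfolding inv_lst_def lnk' lst' iss'
    proof (intro ballI conjI impI)
      fix z assume z: "z \<in> V"
      show "node (((lst s)(?v := r)) z) = z" if "((lnk s)(?v := ?v)) z = z"
        using that IA_lst[OF I z] by (cases "z = ?v") auto
      show "((lst s)(?v := r)) z \<in> insert r (iss s) \<or> ((lst s)(?v := r)) z = r0"
        using IA_lst2[OF I z] by (cases "z = ?v") auto
    qed
    show "inv_misc ?s'"
      unfolding inv_misc_def prd' iss' vis'
    proof (intro conjI allI impI)
      show "insert r (iss s) \<subseteq> R - {r0}" using IA_iss[OF I] r by auto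
      fix c a assume "prd s c = Some a"
      then show "c \<in> insert r (iss s)" using IA_prd[OF I] by auto
    next
      fix r' u assume "((vis s)(r := (vis s r)(?v := Some (time r)))) r' u \<noteq> None"
      then show "u \<in> V" using IA_vis[OF I] v by (cases "r' = r"; cases "u = ?v") auto
    next
      fix c p assume cp: "prd s c = Some p"
      then have "c \<noteq> r" using prdr by auto
      then show "((vis s)(r := (vis s r)(?v := Some (time r)))) c (node p) \<noteq> None"
        using cp IA_pv[OF I] by simp
    qed
  qed
qed


lemma deliver_lok:
  assumes I: "InvA s" and m: "(r, x, u, \<sigma>) \<in> trans s"
  shows "lok V E ((lnk s)(u := x))"
proof -
  have L: "lok V E (lnk s)" using IA_lok[OF I] .
  note M = IA_msg[OF I m]
  have xu: "E x u" "x \<noteq> u" "lnk s x \<noteq> u" using M Eirr by auto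
  have xV: "x \<in> V" using EV xu by blast
  show ?thesis
    unfolding lok_def
  proof (intro conjI ballI allI impI)
    fix q assume q: "q \<in> V"
    show "((lnk s)(u := x)) q \<in> V" using L q xV unfolding lok_def by auto
    show "E q (((lnk s)(u := x)) q)" if "((lnk s)(u := x)) q \<noteq> q"
    proof (cases "q = u")
      case True then show ?thesis using xu Esym by simp
    next
      case False then show ?thesis using that lok_E[OF L q] by simp
    qed
    fix y assume "((lnk s)(u := x)) q = y \<and> ((lnk s)(u := x)) y = q"
    then have h1: "((lnk s)(u := x)) q = y" and h2: "((lnk s)(u := x)) y = q" by auto
    show "q = y"
    proof (cases "q = u")
      case True
      then have "y = x" using h1 by simp
      then have "lnk s x = q" using h2 xu by simp
      then show ?thesis using xu True by simp
    next
      case False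
      show ?thesis
      proof (cases "y = u")
        case True
        then have "q = x" using h2 by simp
        then have "lnk s x = u" using h1 True \<open>q \<noteq> u\<close> by simp
        then show ?thesis using xu by simp
      next
        case False
        then have "lnk s q = y" "lnk s y = q" using h1 h2 \<open>q \<noteq> u\<close> by auto
        then show ?thesis using L q unfolding lok_def by blast
      qed
    qed
  qed
qed

lemma deliver_other:
  assumes I: "InvA s" and m: "(r, x, u, \<sigma>) \<in> trans s" and m': "(r', x', y', \<sigma>') \<in> trans s"
    and ne: "(r', x', y', \<sigma>') \<noteq> (r, x, u, \<sigma>)"
  shows "r' \<noteq> r \<and> \<not> (x' = x \<and> y' = u) \<and> \<not> (x' = u \<and> y' = x)"
proof -
  have "\<not> (r = r' \<or> (x = x' \<and> u = y') \<or> (x = y' \<and> u = x'))"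
  proof
    assume "r = r' \<or> (x = x' \<and> u = y') \<or> (x = y' \<and> u = x')"
    then have "r = r' \<and> x = x' \<and> u = y' \<and> \<sigma> = \<sigma>'" using IA_uniq[OF I m m'] by blast
    then show False using ne by simp
  qed
  then show ?thesis by auto
qed

lemma step_deliver_sink:
  assumes I: "InvA s" and en: "enabled w R r0 time s (Deliver (r, x, u, \<sigma>) \<tau>)" and sk: "lnk s u = u"
  shows "InvA (step node time s (Deliver (r, x, u, \<sigma>) \<tau>))"
proof -
  let ?s' = "step node time s (Deliver (r, x, u, \<sigma>) \<tau>)" and ?m = "(r, x, u, \<sigma>)"
  have m: "?m \<in> trans s" and tc: "clk s \<le> \<tau>" using en by auto
  have lnk': "lnk ?s' = (lnk s)(u := x)" and trans': "trans ?s' = trans s - {?m}"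
    and prd': "prd ?s' = (prd s)(r := Some (lst s u))" and lst': "lst ?s' = lst s"
    and iss': "iss ?s' = iss s" and clk': "clk ?s' = \<tau>"
    and vis': "vis ?s' = (vis s)(r := (vis s r)(u := Some \<tau>))"
    by (simp_all only: deliver_lnk deliver_trans deliver_prd deliver_lst deliver_iss deliver_clk deliver_vis if_P[OF sk])
  note M = IA_msg[OF I m]
  have xu: "E x u" "x \<noteq> u" "lnk s x \<noteq> u" "r \<in> iss s" "prd s r = None" using M Eirr by auto
  have uV: "u \<in> V" using EV xu by blast
  show ?thesis
    unfolding InvA_def
  proof (intro conjI)
    show "lok V E (lnk ?s')" using deliver_lok[OF I m] lnk' by simp
    show "inv_msg ?s'"
      unfolding inv_msg_def lnk' trans' prd' iss' clk'
    proof (intro allI impI)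
      fix r' x' y' \<sigma>' assume mm: "(r', x', y', \<sigma>') \<in> trans s - {?m}"
      then have mm': "(r', x', y', \<sigma>') \<in> trans s" and ne: "(r', x', y', \<sigma>') \<noteq> ?m" by auto
      note O = deliver_other[OF I m mm' ne]
      note M' = IA_msg[OF I mm']
      have a: "((lnk s)(u := x)) x' \<noteq> y'"
        using M' O by (cases "x' = u") auto
      have b: "((lnk s)(u := x)) y' \<noteq> x'"
        using M' O by (cases "y' = u") auto
      show "E x' y' \<and> ((lnk s)(u := x)) x' \<noteq> y' \<and> ((lnk s)(u := x)) y' \<noteq> x' \<and> r' \<in> iss s \<and>
          ((prd s)(r := Some (lst s u))) r' = None \<and> \<sigma>' \<le> \<tau>"
        using M' O a b tc by auto
    qed
    show "inv_uniq ?s'" using I unfolding InvA_def inv_uniq_def trans' by blast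
    show "inv_cov ?s'"
      unfolding inv_cov_def trans' lnk'
    proof (intro allI impI)
      fix a b assume ab: "E a b"
      have "a \<noteq> b" using ab Eirr by auto
      consider "lnk s a = b" | "lnk s b = a" | "\<exists>r' \<sigma>'. (r', a, b, \<sigma>') \<in> trans s" | "\<exists>r' \<sigma>'. (r', b, a, \<sigma>') \<in> trans s"
        using IA_cov[OF I ab] by blast
      then show "((lnk s)(u := x)) a = b \<or> ((lnk s)(u := x)) b = a \<or>
          (\<exists>r' \<sigma>'. (r', a, b, \<sigma>') \<in> trans s - {?m}) \<or> (\<exists>r' \<sigma>'. (r', b, a, \<sigma>') \<in> trans s - {?m})"
      proof cases
        case 1 then have "a \<noteq> u" using sk \<open>a \<noteq> b\<close> by auto
        then show ?thesis using 1 by simp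
      next
        case 2 then have "b \<noteq> u" using sk \<open>a \<noteq> b\<close> by auto
        then show ?thesis using 2 by simp
      next
        case 3
        then obtain r' \<sigma>' where mm: "(r', a, b, \<sigma>') \<in> trans s" by blast
        show ?thesis
        proof (cases "(r', a, b, \<sigma>') = ?m")
          case True then have "b = u" "a = x" by auto
          then show ?thesis by simp
        next
          case False then show ?thesis using mm by blast
        qed
      next
        case 4
        then obtain r' \<sigma>' where mm: "(r', b, a, \<sigma>') \<in> trans s" by blast
        show ?thesis
        proof (cases "(r', b, a, \<sigma>') = ?m")
          case True then have "a = u" "b = x" by auto
          then show ?thesis by simp
        next
          case False then show ?thesis using mm by blast
        qed
      qed
    qed
    show "inv_lst ?s'"
      unfolding inv_lst_def lnk' lst' iss'
    proof (intro ballI conjI impI)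
      fix z assume z: "z \<in> V"
      show "node (lst s z) = z" if "((lnk s)(u := x)) z = z"
      proof (cases "z = u")
        case True then show ?thesis using that xu by simp
      next
        case False then show ?thesis using that IA_lst[OF I z] by simp
      qed
      show "lst s z \<in> iss s \<or> lst s z = r0" using IA_lst2[OF I z] .
    qed
    show "inv_misc ?s'"
      unfolding inv_misc_def prd' iss' vis'
    proof (intro conjI allI impI)
      show "iss s \<subseteq> R - {r0}" using IA_iss[OF I] .
      fix c a assume "((prd s)(r := Some (lst s u))) c = Some a"
      then show "c \<in> iss s" using IA_prd[OF I] xu by (cases "c = r") auto
    next
      fix r' q assume "((vis s)(r := (vis s r)(u := Some \<tau>))) r' q \<noteq> None"
      then show "q \<in> V" using IA_vis[OF I] uV by (cases "r' = r"; cases "q = u") auto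
    next
      fix c p assume cp: "((prd s)(r := Some (lst s u))) c = Some p"
      show "((vis s)(r := (vis s r)(u := Some \<tau>))) c (node p) \<noteq> None"
      proof (cases "c = r")
        case True
        then have "p = lst s u" using cp by simp
        then have "node p = u" using IA_lst[OF I uV sk] by simp
        then show ?thesis using True by simp
      next
        case False
        then show ?thesis using cp IA_pv[OF I] by simp
      qed
    qed
  qed
qed

lemma step_deliver_fwd:
  assumes I: "InvA s" and en: "enabled w R r0 time s (Deliver (r, x, u, \<sigma>) \<tau>)" and ns: "lnk s u \<noteq> u"
  shows "InvA (step node time s (Deliver (r, x, u, \<sigma>) \<tau>))"
proof -
  let ?s' = "step node time s (Deliver (r, x, u, \<sigma>) \<tau>)" and ?m = "(r, x, u, \<sigma>)"
  let ?z = "lnk s u"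
  have m: "?m \<in> trans s" and tc: "clk s \<le> \<tau>" using en by auto
  have lnk': "lnk ?s' = (lnk s)(u := x)" and trans': "trans ?s' = insert (r, u, ?z, \<tau>) (trans s - {?m})"
    and prd': "prd ?s' = prd s" and lst': "lst ?s' = lst s"
    and iss': "iss ?s' = iss s" and clk': "clk ?s' = \<tau>"
    and vis': "vis ?s' = (vis s)(r := (vis s r)(u := Some \<tau>))"
    by (simp_all only: deliver_lnk deliver_trans deliver_prd deliver_lst deliver_iss deliver_clk deliver_vis if_not_P[OF ns])
  have L: "lok V E (lnk s)" using IA_lok[OF I] .
  note M = IA_msg[OF I m]
  have xu: "E x u" "x \<noteq> u" "lnk s x \<noteq> u" "lnk s u \<noteq> x" "r \<in> iss s" "prd s r = None" using M Eirr by auto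
  have uV: "u \<in> V" using EV xu by blast
  have Euz: "E u ?z" using lok_E[OF L uV ns] .
  have zu: "lnk s ?z \<noteq> u" using L uV ns unfolding lok_def by metis
  have zx: "?z \<noteq> x" using xu by simp
  show ?thesis
    unfolding InvA_def
  proof (intro conjI)
    show "lok V E (lnk ?s')" using deliver_lok[OF I m] lnk' by simp
    show "inv_msg ?s'"
      unfolding inv_msg_def lnk' trans' prd' iss' clk'
    proof (intro allI impI)
      fix r' x' y' \<sigma>' assume mm0: "(r', x', y', \<sigma>') \<in> insert (r, u, ?z, \<tau>) (trans s - {?m})"
      show "E x' y' \<and> ((lnk s)(u := x)) x' \<noteq> y' \<and> ((lnk s)(u := x)) y' \<noteq> x' \<and> r' \<in> iss s \<and>
          prd s r' = None \<and> \<sigma>' \<le> \<tau>"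
      proof (cases "(r', x', y', \<sigma>') = (r, u, ?z, \<tau>)")
        case True
        have "u \<noteq> ?z" using ns by simp
        then show ?thesis using True Euz zx zu xu by auto
      next
        case False
        then have mm: "(r', x', y', \<sigma>') \<in> trans s - {?m}" using mm0 by blast
        then have mm': "(r', x', y', \<sigma>') \<in> trans s" and ne: "(r', x', y', \<sigma>') \<noteq> ?m" by auto
        note O = deliver_other[OF I m mm' ne]
        note M' = IA_msg[OF I mm']
        have a: "((lnk s)(u := x)) x' \<noteq> y'"
          using M' O by (cases "x' = u") auto
        have b: "((lnk s)(u := x)) y' \<noteq> x'"
          using M' O by (cases "y' = u") auto
        show ?thesis using M' O a b tc by auto
      qed
    qed
    show "inv_uniq ?s'"
      unfolding inv_uniq_def trans'
    proof (intro allI impI)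
      fix r1 x1 y1 s1 r2 x2 y2 s2
      assume m1: "(r1, x1, y1, s1) \<in> insert (r, u, ?z, \<tau>) (trans s - {?m})"
        and m2: "(r2, x2, y2, s2) \<in> insert (r, u, ?z, \<tau>) (trans s - {?m})"
        and c: "r1 = r2 \<or> (x1 = x2 \<and> y1 = y2) \<or> (x1 = y2 \<and> y1 = x2)"
      have new_old: False if "(r', x', y', s'') \<in> trans s - {?m}" "r = r' \<or> (u = x' \<and> ?z = y') \<or> (u = y' \<and> ?z = x')"
        for r' x' y' s''
      proof -
        have mm': "(r', x', y', s'') \<in> trans s" and ne: "(r', x', y', s'') \<noteq> ?m" using that(1) by auto
        note O = deliver_other[OF I m mm' ne]
        note M' = IA_msg[OF I mm']
        show False using that(2) O M' by auto
      qed
      consider "(r1, x1, y1, s1) = (r, u, ?z, \<tau>)" | "(r1, x1, y1, s1) \<in> trans s - {?m}" using m1 by blast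
      then show "r1 = r2 \<and> x1 = x2 \<and> y1 = y2 \<and> s1 = s2"
      proof cases
        case 1
        consider "(r2, x2, y2, s2) = (r, u, ?z, \<tau>)" | "(r2, x2, y2, s2) \<in> trans s - {?m}" using m2 by blast
        then show ?thesis
        proof cases
          case 1 then show ?thesis using \<open>(r1, x1, y1, s1) = (r, u, ?z, \<tau>)\<close> by simp
        next
          case 2
          have "r = r2 \<or> (u = x2 \<and> ?z = y2) \<or> (u = y2 \<and> ?z = x2)" using c 1 by auto
          then show ?thesis using new_old[OF 2] by blast
        qed
      next
        case 2
        note o2 = this
        consider "(r2, x2, y2, s2) = (r, u, ?z, \<tau>)" | "(r2, x2, y2, s2) \<in> trans s - {?m}" using m2 by blast
        then show ?thesis
        proof cases
          case 1
          have "r = r1 \<or> (u = x1 \<and> ?z = y1) \<or> (u = y1 \<and> ?z = x1)" using c 1 by auto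
          then show ?thesis using new_old[OF o2] by blast
        next
          case 2
          have a: "(r1, x1, y1, s1) \<in> trans s" "(r2, x2, y2, s2) \<in> trans s" using o2 2 by auto
          show ?thesis using IA_uniq[OF I a c] .
        qed
      qed
    qed
    show "inv_cov ?s'"
      unfolding inv_cov_def trans' lnk'
    proof (intro allI impI)
      fix a b assume ab: "E a b"
      have "a \<noteq> b" using ab Eirr by auto
      consider "lnk s a = b" | "lnk s b = a" | "\<exists>r' \<sigma>'. (r', a, b, \<sigma>') \<in> trans s" | "\<exists>r' \<sigma>'. (r', b, a, \<sigma>') \<in> trans s"
        using IA_cov[OF I ab] by blast
      then show "((lnk s)(u := x)) a = b \<or> ((lnk s)(u := x)) b = a \<or>
          (\<exists>r' \<sigma>'. (r', a, b, \<sigma>') \<in> insert (r, u, ?z, \<tau>) (trans s - {?m})) \<or>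
          (\<exists>r' \<sigma>'. (r', b, a, \<sigma>') \<in> insert (r, u, ?z, \<tau>) (trans s - {?m}))"
      proof cases
        case 1
        show ?thesis
        proof (cases "a = u")
          case True then have "b = ?z" using 1 by simp
          then show ?thesis using True by blast
        next
          case False then show ?thesis using 1 by simp
        qed
      next
        case 2
        show ?thesis
        proof (cases "b = u")
          case True then have "a = ?z" using 2 by simp
          then show ?thesis using True by blast
        next
          case False then show ?thesis using 2 by simp
        qed
      next
        case 3
        then obtain r' \<sigma>' where mm: "(r', a, b, \<sigma>') \<in> trans s" by blast
        show ?thesis
        proof (cases "(r', a, b, \<sigma>') = ?m")
          case True then have "b = u" "a = x" by auto
          then show ?thesis by simp
        next
          case False then show ?thesis using mm by blast
        qed
      next
        case 4
        then obtain r' \<sigma>' where mm: "(r', b, a, \<sigma>') \<in> trans s" by blast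
        show ?thesis
        proof (cases "(r', b, a, \<sigma>') = ?m")
          case True then have "a = u" "b = x" by auto
          then show ?thesis by simp
        next
          case False then show ?thesis using mm by blast
        qed
      qed
    qed
    show "inv_lst ?s'"
      unfolding inv_lst_def lnk' lst' iss'
    proof (intro ballI conjI impI)
      fix z assume z: "z \<in> V"
      show "node (lst s z) = z" if "((lnk s)(u := x)) z = z"
      proof (cases "z = u")
        case True then show ?thesis using that xu by simp
      next
        case False then show ?thesis using that IA_lst[OF I z] by simp
      qed
      show "lst s z \<in> iss s \<or> lst s z = r0" using IA_lst2[OF I z] .
    qed
    show "inv_misc ?s'"
      unfolding inv_misc_def prd' iss' vis'
    proof (intro conjI allI impI)
      show "iss s \<subseteq> R - {r0}" using IA_iss[OF I] .
      fix c a assume "prd s c = Some a"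
      then show "c \<in> iss s" using IA_prd[OF I] by auto
    next
      fix r' q assume "((vis s)(r := (vis s r)(u := Some \<tau>))) r' q \<noteq> None"
      then show "q \<in> V" using IA_vis[OF I] uV by (cases "r' = r"; cases "q = u") auto
    next
      fix c p assume cp: "prd s c = Some p"
      then have "c \<noteq> r" using xu by auto
      then show "((vis s)(r := (vis s r)(u := Some \<tau>))) c (node p) \<noteq> None"
        using cp IA_pv[OF I] by simp
    qed
  qed
qed

lemma InvA_step:
  assumes I: "InvA s" and en: "enabled w R r0 time s e"
  shows "InvA (step node time s e)"
proof (cases e)
  case (Issue r)
  then show ?thesis using step_issue_self[OF I] step_issue_other[OF I] en
    by (cases "lnk s (node r) = node r") auto
next
  case (Deliver m \<tau>)
  obtain r x u \<sigma> where "m = (r, x, u, \<sigma>)" by (cases m) auto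
  then show ?thesis using step_deliver_sink[OF I] step_deliver_fwd[OF I] en Deliver
    by (cases "lnk s u = u") auto
qed

end

lemma indeg_acyc:
  assumes indeg: "\<And>a a' c. (a, c) \<in> Rel \<Longrightarrow> (a', c) \<in> Rel \<Longrightarrow> a = a'"
    and root: "\<And>a. (a, r0) \<notin> Rel"
    and reach: "(r0, c) \<in> Rel\<^sup>*"
  shows "(c, c) \<notin> Rel\<^sup>+"
  using reach
proof (induction rule: rtrancl_induct)
  case base
  show ?case
  proof
    assume "(r0, r0) \<in> Rel\<^sup>+"
    then show False by (meson root tranclD2)
  qed
next
  case (step b c)
  show ?case
  proof
    assume "(c, c) \<in> Rel\<^sup>+"
    then show False
    proof (rule tranclE)
      assume "(c, c) \<in> Rel"
      then have "b = c" using indeg step(2) by blast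
      then show False using step(3) \<open>(c, c) \<in> Rel\<close> by blast
    next
      fix a' assume "(c, a') \<in> Rel\<^sup>+" "(a', c) \<in> Rel"
      then have "a' = b" using indeg step(2) by blast
      then have "(b, b) \<in> Rel\<^sup>+" using \<open>(c, a') \<in> Rel\<^sup>+\<close> step(2) by (meson trancl_into_trancl2)
      then show False using step(3) by blast
    qed
  qed
qed

lemma rtrancl_avoid:
  assumes "(a, b) \<in> Rel\<^sup>*"
  shows "(a, b) \<in> {(c, d). (c, d) \<in> Rel \<and> c \<noteq> X}\<^sup>* \<or> (a, X) \<in> Rel\<^sup>*"
  using assms
proof (induction rule: rtrancl_induct)
  case base then show ?case by simp
next
  case (step b c)
  show ?case
  proof (cases "(a, X) \<in> Rel\<^sup>*")
    case True then show ?thesis by simp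
  next
    case False
    then have ab: "(a, b) \<in> {(c, d). (c, d) \<in> Rel \<and> c \<noteq> X}\<^sup>*" using step by blast
    have "b \<noteq> X" using False step(1) by blast
    then have "(b, c) \<in> {(c, d). (c, d) \<in> Rel \<and> c \<noteq> X}" using step(2) by simp
    then show ?thesis using ab by (meson rtrancl.rtrancl_into_rtrancl)
  qed
qed

definition visit :: "('v, 'r) arrow_event \<Rightarrow> 'r \<Rightarrow> ('r \<Rightarrow> 'v) \<Rightarrow> ('r \<Rightarrow> real) \<Rightarrow> 'v \<Rightarrow> real \<Rightarrow> bool" where
  "visit e a node time u \<tau> \<longleftrightarrow> (e = Issue a \<and> u = node a \<and> \<tau> = time a) \<or> (\<exists>x \<sigma>. e = Deliver (a, x, u, \<sigma>) \<tau>)"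

context arrowctx
begin

definition tail :: "('v, 'r) arrow_state \<Rightarrow> 'v \<Rightarrow> 'r" where
  "tail s q = lst s (sinkf V (lnk s) q)"

definition tE :: "('v, 'r) arrow_state \<Rightarrow> ('r \<times> 'r) set" where
  "tE s = {(c, r). prd s r = Some c} \<union> {(c, r). \<exists>x y \<sigma>. (r, x, y, \<sigma>) \<in> trans s \<and> c = tail s y}"

definition InvB :: "('v, 'r) arrow_state \<Rightarrow> bool" where
  "InvB s \<longleftrightarrow> (\<forall>c. c \<in> iss s \<or> c = r0 \<longrightarrow> (r0, c) \<in> (tE s)\<^sup>*) \<and>
     (\<forall>r x y \<sigma>. (r, x, y, \<sigma>) \<in> trans s \<longrightarrow> (r, tail s x) \<in> (tE s)\<^sup>*)"

lemma tE_prd: "prd s r = Some c \<Longrightarrow> (c, r) \<in> tE s" by (simp add: tE_def)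
lemma tE_msg: "(r, x, y, \<sigma>) \<in> trans s \<Longrightarrow> (tail s y, r) \<in> tE s" by (auto simp: tE_def)

lemma tE_indeg:
  assumes I: "InvA s" and e1: "(a, c) \<in> tE s" and e2: "(a', c) \<in> tE s"
  shows "a = a'"
proof -
  have one: "a = a'" if "prd s c = Some a" "(a', c) \<in> tE s" for a a'
  proof -
    have "\<not> (\<exists>x y \<sigma>. (c, x, y, \<sigma>) \<in> trans s)" using IA_msg[OF I] that(1) by fastforce
    then show ?thesis using that unfolding tE_def by auto
  qed
  show ?thesis
  proof (cases "prd s c = Some a")
    case True then show ?thesis using one e2 by blast
  next
    case False
    then obtain x y \<sigma> where m1: "(c, x, y, \<sigma>) \<in> trans s" "a = tail s y" using e1 unfolding tE_def by auto
    show ?thesis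
    proof (cases "prd s c = Some a'")
      case True then show ?thesis using one e1 by (metis)
    next
      case False
      then obtain x' y' \<sigma>' where m2: "(c, x', y', \<sigma>') \<in> trans s" "a' = tail s y'" using e2 unfolding tE_def by auto
      have "y = y'" using IA_uniq[OF I m1(1) m2(1)] by blast
      then show ?thesis using m1 m2 by simp
    qed
  qed
qed

lemma tE_root: "InvA s \<Longrightarrow> (a, r0) \<notin> tE s"
proof
  assume I: "InvA s" and e: "(a, r0) \<in> tE s"
  have "r0 \<notin> iss s" using IA_iss[OF I] by auto
  then have "prd s r0 = None" using IA_prd_none[OF I] by simp
  moreover have "\<not> (\<exists>x y \<sigma>. (r0, x, y, \<sigma>) \<in> trans s)" using IA_msg[OF I] \<open>r0 \<notin> iss s\<close> by blast
  ultimately show False using e unfolding tE_def by auto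
qed

lemma tE_acyc:
  assumes I: "InvA s" and B: "InvB s" and c: "c \<in> iss s \<or> c = r0"
  shows "(c, c) \<notin> (tE s)\<^sup>+"
proof (rule indeg_acyc)
  show "\<And>a a' c. (a, c) \<in> tE s \<Longrightarrow> (a', c) \<in> tE s \<Longrightarrow> a = a'" using tE_indeg[OF I] by blast
  show "\<And>a. (a, r0) \<notin> tE s" using tE_root[OF I] by blast
  show "(r0, c) \<in> (tE s)\<^sup>*" using B c unfolding InvB_def by blast
qed

lemma InvB_init: "InvB (init_state lnk0 r0)"
  unfolding InvB_def by (simp add: init_state_def)


lemma cls_issue:
  assumes L: "lok V E L" and L': "lok V E (L(v := v))" and v: "v \<in> V" and q: "q \<in> V"
  shows "(sinkf V (L(v := v)) q = sinkf V L q \<and> sinkf V L q \<noteq> v) \<or>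
         (sinkf V (L(v := v)) q = v \<and> sinkf V L q = sinkf V L v)"
proof (cases "\<exists>k. (L^^k) q = v")
  case True
  then obtain k where k: "(L^^k) q = v" by blast
  have "sinkf V (L(v := v)) q = sinkf V (L(v := v)) v" by (rule sink_through[OF L' q k])
  also have "\<dots> = v" by (rule sink_self) simp
  finally have a: "sinkf V (L(v := v)) q = v" .
  have "sinkf V L q = sinkf V L v" using sink_iter[OF L q, of k] k by simp
  then show ?thesis using a by simp
next
  case False
  then have a: "sinkf V (L(v := v)) q = sinkf V L q" using sink_avoid by blast
  have "sinkf V L q \<noteq> v" using False unfolding sinkf_def by blast
  then show ?thesis using a by simp
qed

lemma cls_deliver:
  assumes L: "lok V E L" and L': "lok V E (L(u := x))" and xu: "E x u" "L x \<noteq> u" and q: "q \<in> V"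
  shows "(sinkf V (L(u := x)) q = sinkf V L q) \<or>
         (sinkf V (L(u := x)) q = sinkf V L x \<and> sinkf V L q = sinkf V L u)"
proof (cases "\<exists>k. (L^^k) q = u")
  case True
  then obtain k where k: "(L^^k) q = u" by blast
  have uV: "u \<in> V" and xV: "x \<in> V" using EV xu by auto
  have "sinkf V (L(u := x)) q = sinkf V (L(u := x)) u" by (rule sink_through[OF L' q k])
  also have "\<dots> = sinkf V (L(u := x)) ((L(u := x)) u)" using sink_step[OF L' uV] by simp
  also have "\<dots> = sinkf V (L(u := x)) x" by simp
  also have "\<dots> = sinkf V L x" using F2[OF L xu] by (intro sink_avoid) blast
  finally have a: "sinkf V (L(u := x)) q = sinkf V L x" .
  have "sinkf V L q = sinkf V L u" using sink_iter[OF L q, of k] k by simp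
  then show ?thesis using a by simp
next
  case False
  then have a: "sinkf V (L(u := x)) q = sinkf V L q" using sink_avoid by blast
  then show ?thesis by simp
qed

lemma star_mono: "A \<subseteq> B\<^sup>* \<Longrightarrow> (a, b) \<in> A\<^sup>* \<Longrightarrow> (a, b) \<in> B\<^sup>*"
  using rtrancl_subset_rtrancl by blast

definition good_step :: "('v, 'r) arrow_state \<Rightarrow> ('v, 'r) arrow_state \<Rightarrow> bool" where
  "good_step s s' \<longleftrightarrow> (\<forall>q\<in>V. (tail s q, tail s' q) \<in> (tE s')\<^sup>*) \<and> tE s \<subseteq> (tE s')\<^sup>* \<and> InvB s'"

lemma mono_gen:
  assumes pm: "\<And>c a. prd s c = Some a \<Longrightarrow> prd s' c = Some a"
    and ms: "\<And>r x y \<sigma>. (r, x, y, \<sigma>) \<in> trans s \<Longrightarrow> (tail s y, r) \<in> (tE s')\<^sup>*"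
  shows "tE s \<subseteq> (tE s')\<^sup>*"
proof
  fix e assume "e \<in> tE s"
  then obtain c r where e: "e = (c, r)" "(c, r) \<in> tE s" by (cases e) auto
  then consider "prd s r = Some c" | "\<exists>x y \<sigma>. (r, x, y, \<sigma>) \<in> trans s \<and> c = tail s y"
    unfolding tE_def by auto
  then show "e \<in> (tE s')\<^sup>*"
  proof cases
    case 1 then show ?thesis using pm tE_prd e by blast
  next
    case 2 then show ?thesis using ms e by blast
  qed
qed

lemma step_issue_self_B:
  assumes I: "InvA s" and B: "InvB s" and en: "enabled w R r0 time s (Issue r)" and self: "lnk s (node r) = node r"
  shows "good_step s (step node time s (Issue r)) \<and> (tail s (node r), r) \<in> tE (step node time s (Issue r))"
proof -
  let ?v = "node r" and ?s' = "step node time s (Issue r)"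
  have r: "r \<in> R" "r \<noteq> r0" "r \<notin> iss s" "clk s \<le> time r" using en by auto
  have v: "?v \<in> V" using nodeV r by simp
  have lnk': "lnk ?s' = lnk s" and trans': "trans ?s' = trans s"
    and prd': "prd ?s' = (prd s)(r := Some (lst s ?v))" and lst': "lst ?s' = (lst s)(?v := r)"
    and iss': "iss ?s' = insert r (iss s)"
    by (simp_all only: issue_lnk issue_trans issue_prd issue_lst issue_iss if_P[OF self])
  have L: "lok V E (lnk s)" using IA_lok[OF I] .
  have prdr: "prd s r = None" using IA_prd_none[OF I r(3)] .
  have tv: "tail s ?v = lst s ?v" unfolding tail_def using sink_self[of "lnk s" ?v] self by simp
  have edge: "(lst s ?v, r) \<in> tE ?s'" using prd' by (intro tE_prd) simp
  have TM: "(tail s q, tail ?s' q) \<in> (tE ?s')\<^sup>*" if q: "q \<in> V" for q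
  proof (cases "sinkf V (lnk s) q = ?v")
    case True
    then have "tail s q = lst s ?v" "tail ?s' q = r" unfolding tail_def lnk' lst' by simp_all
    then show ?thesis using edge by simp
  next
    case False
    then have "tail ?s' q = tail s q" unfolding tail_def lnk' lst' by simp
    then show ?thesis by simp
  qed
  have pm: "prd ?s' c = Some a" if "prd s c = Some a" for c a
    using that prdr prd' by (cases "c = r") auto
  have ms: "(tail s y, r') \<in> (tE ?s')\<^sup>*" if m: "(r', x, y, \<sigma>) \<in> trans s" for r' x y \<sigma>
  proof -
    have y: "y \<in> V" using IA_msg[OF I m] EV by blast
    have "(tail ?s' y, r') \<in> tE ?s'" using m trans' by (intro tE_msg[where x=x and \<sigma>=\<sigma>]) simp
    then show ?thesis using TM[OF y] by (meson rtrancl.rtrancl_into_rtrancl)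
  qed
  have M: "tE s \<subseteq> (tE ?s')\<^sup>*" by (rule mono_gen[OF pm ms]) auto
  have B': "InvB ?s'"
    unfolding InvB_def
  proof (intro conjI allI impI)
    fix c assume c: "c \<in> iss ?s' \<or> c = r0"
    show "(r0, c) \<in> (tE ?s')\<^sup>*"
    proof (cases "c = r")
      case True
      have "(r0, lst s ?v) \<in> (tE s)\<^sup>*" using B IA_lst2[OF I v] unfolding InvB_def by blast
      then have "(r0, lst s ?v) \<in> (tE ?s')\<^sup>*" using star_mono[OF M] by blast
      then show ?thesis using edge True by (meson rtrancl.rtrancl_into_rtrancl)
    next
      case False
      then have "c \<in> iss s \<or> c = r0" using c iss' by auto
      then have "(r0, c) \<in> (tE s)\<^sup>*" using B unfolding InvB_def by blast
      then show ?thesis using star_mono[OF M] by blast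
    qed
  next
    fix r' x y \<sigma> assume "(r', x, y, \<sigma>) \<in> trans ?s'"
    then have m: "(r', x, y, \<sigma>) \<in> trans s" using trans' by simp
    have x: "x \<in> V" using IA_msg[OF I m] EV by blast
    have "(r', tail s x) \<in> (tE s)\<^sup>*" using B m unfolding InvB_def by blast
    then have "(r', tail s x) \<in> (tE ?s')\<^sup>*" using star_mono[OF M] by blast
    then show "(r', tail ?s' x) \<in> (tE ?s')\<^sup>*" using TM[OF x] by (meson rtrancl_trans)
  qed
  show ?thesis using TM M B' edge tv unfolding good_step_def by simp
qed


lemma step_issue_other_B:
  assumes I: "InvA s" and B: "InvB s" and en: "enabled w R r0 time s (Issue r)" and ns: "lnk s (node r) \<noteq> node r"
  shows "good_step s (step node time s (Issue r)) \<and> (tail s (node r), r) \<in> tE (step node time s (Issue r))"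
proof -
  let ?v = "node r" and ?s' = "step node time s (Issue r)"
  let ?p = "lnk s ?v"
  have r: "r \<in> R" "r \<noteq> r0" "r \<notin> iss s" "clk s \<le> time r" using en by auto
  have v: "?v \<in> V" using nodeV r by simp
  have lnk': "lnk ?s' = (lnk s)(?v := ?v)" and trans': "trans ?s' = insert (r, ?v, ?p, time r) (trans s)"
    and prd': "prd ?s' = prd s" and lst': "lst ?s' = (lst s)(?v := r)"
    and iss': "iss ?s' = insert r (iss s)"
    by (simp_all only: issue_lnk issue_trans issue_prd issue_lst issue_iss if_not_P[OF ns])
  have L: "lok V E (lnk s)" using IA_lok[OF I] .
  have L': "lok V E ((lnk s)(?v := ?v))" using IA_lok[OF InvA_step[OF I en]] lnk' by simp
  have pV: "?p \<in> V" using L v unfolding lok_def by blast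
  have p_avoid: "((lnk s)^^k) ?p \<noteq> ?v" for k
  proof
    assume "((lnk s)^^k) ?p = ?v"
    then have "((lnk s)^^(Suc k)) ?v = ?v" by (simp only: funpow_Suc_right comp_apply)
    then have "lnk s ?v = ?v" using LC[OF L v, of "Suc k"] by simp
    then show False using ns by simp
  qed
  have tp: "tail ?s' ?p = tail s ?v"
  proof -
    have "sinkf V ((lnk s)(?v := ?v)) ?p = sinkf V (lnk s) ?p" using p_avoid by (intro sink_avoid) blast
    moreover have "sinkf V (lnk s) ?p \<noteq> ?v" using p_avoid unfolding sinkf_def by blast
    moreover have "sinkf V (lnk s) ?p = sinkf V (lnk s) ?v" using sink_step[OF L v] .
    ultimately show ?thesis unfolding tail_def lnk' lst' by simp
  qed
  have edge: "(tail s ?v, r) \<in> tE ?s'"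
    using tE_msg[of r ?v ?p "time r" ?s'] trans' tp by simp
  have TM: "(tail s q, tail ?s' q) \<in> (tE ?s')\<^sup>*" if q: "q \<in> V" for q
  proof -
    consider "sinkf V ((lnk s)(?v := ?v)) q = sinkf V (lnk s) q" "sinkf V (lnk s) q \<noteq> ?v"
      | "sinkf V ((lnk s)(?v := ?v)) q = ?v" "sinkf V (lnk s) q = sinkf V (lnk s) ?v"
      using cls_issue[OF L L' v q] by blast
    then show ?thesis
    proof cases
      case 1
      then have "tail ?s' q = tail s q" unfolding tail_def lnk' lst' by simp
      then show ?thesis by simp
    next
      case 2
      then have "tail ?s' q = r" "tail s q = tail s ?v" unfolding tail_def lnk' lst' by simp_all
      then show ?thesis using edge by simp
    qed
  qed
  have pm: "prd ?s' c = Some a" if "prd s c = Some a" for c a using that prd' by simp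
  have ms: "(tail s y, r') \<in> (tE ?s')\<^sup>*" if m: "(r', x, y, \<sigma>) \<in> trans s" for r' x y \<sigma>
  proof -
    have y: "y \<in> V" using IA_msg[OF I m] EV by blast
    have "(tail ?s' y, r') \<in> tE ?s'" using m trans' by (intro tE_msg[where x=x and \<sigma>=\<sigma>]) simp
    then show ?thesis using TM[OF y] by (meson rtrancl.rtrancl_into_rtrancl)
  qed
  have M: "tE s \<subseteq> (tE ?s')\<^sup>*" by (rule mono_gen[OF pm ms]) auto
  have B': "InvB ?s'"
    unfolding InvB_def
  proof (intro conjI allI impI)
    fix c assume c: "c \<in> iss ?s' \<or> c = r0"
    show "(r0, c) \<in> (tE ?s')\<^sup>*"
    proof (cases "c = r")
      case True
      have sv: "sinkf V (lnk s) ?v \<in> V" using sink_V[OF L v] .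
      have "(r0, tail s ?v) \<in> (tE s)\<^sup>*" using B IA_lst2[OF I sv] unfolding InvB_def tail_def by blast
      then have "(r0, tail s ?v) \<in> (tE ?s')\<^sup>*" using star_mono[OF M] by blast
      then show ?thesis using edge True by (meson rtrancl.rtrancl_into_rtrancl)
    next
      case False
      then have "c \<in> iss s \<or> c = r0" using c iss' by auto
      then have "(r0, c) \<in> (tE s)\<^sup>*" using B unfolding InvB_def by blast
      then show ?thesis using star_mono[OF M] by blast
    qed
  next
    fix r' x y \<sigma> assume "(r', x, y, \<sigma>) \<in> trans ?s'"
    then consider "(r', x, y, \<sigma>) = (r, ?v, ?p, time r)" | "(r', x, y, \<sigma>) \<in> trans s" using trans' by auto
    then show "(r', tail ?s' x) \<in> (tE ?s')\<^sup>*"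
    proof cases
      case 1
      have "sinkf V ((lnk s)(?v := ?v)) ?v = ?v" by (rule sink_self) simp
      then have "tail ?s' ?v = r" unfolding tail_def lnk' lst' by simp
      then show ?thesis using 1 by simp
    next
      case 2
      note m = 2
      have x: "x \<in> V" using IA_msg[OF I m] EV by blast
      have "(r', tail s x) \<in> (tE s)\<^sup>*" using B m unfolding InvB_def by blast
      then have "(r', tail s x) \<in> (tE ?s')\<^sup>*" using star_mono[OF M] by blast
      then show ?thesis using TM[OF x] by (meson rtrancl_trans)
    qed
  qed
  show ?thesis using TM M B' edge unfolding good_step_def by simp
qed

lemma deliver_key:
  assumes I: "InvA s" and B: "InvB s" and m: "(r, x, u, \<sigma>) \<in> trans s"
    and sub: "{(c, d). (c, d) \<in> tE s \<and> c \<noteq> tail s u} \<subseteq> tE s'"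
  shows "(r, tail s x) \<in> (tE s')\<^sup>*"
proof -
  have a: "(r, tail s x) \<in> (tE s)\<^sup>*" using B m unfolding InvB_def by blast
  have "(r, tail s x) \<in> {(c, d). (c, d) \<in> tE s \<and> c \<noteq> tail s u}\<^sup>* \<or> (r, tail s u) \<in> (tE s)\<^sup>*"
    by (rule rtrancl_avoid[OF a])
  then show ?thesis
  proof
    assume "(r, tail s x) \<in> {(c, d). (c, d) \<in> tE s \<and> c \<noteq> tail s u}\<^sup>*"
    then show ?thesis by (rule subsetD[OF rtrancl_mono[OF sub]])
  next
    assume 2: "(r, tail s u) \<in> (tE s)\<^sup>*"
    have e: "(tail s u, r) \<in> tE s" using tE_msg[OF m] .
    have "(r, r) \<in> (tE s)\<^sup>+" by (rule rtrancl_into_trancl1[OF 2 e])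
    moreover have "r \<in> iss s" using IA_msg[OF I m] by (simp only: conj_absorb)
    ultimately show ?thesis using tE_acyc[OF I B] by simp
  qed
qed

lemma step_deliver_B:
  assumes I: "InvA s" and B: "InvB s" and en: "enabled w R r0 time s (Deliver (r, x, u, \<sigma>) \<tau>)"
  shows "good_step s (step node time s (Deliver (r, x, u, \<sigma>) \<tau>)) \<and> (tail s u, r) \<in> tE (step node time s (Deliver (r, x, u, \<sigma>) \<tau>))"
proof -
  let ?s' = "step node time s (Deliver (r, x, u, \<sigma>) \<tau>)" and ?m = "(r, x, u, \<sigma>)"
  let ?z = "lnk s u"
  have m: "?m \<in> trans s" using en by auto
  have lnk': "lnk ?s' = (lnk s)(u := x)" and lst': "lst ?s' = lst s" and iss': "iss ?s' = iss s"
    by (simp_all only: deliver_lnk deliver_lst deliver_iss)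
  have L: "lok V E (lnk s)" using IA_lok[OF I] .
  have L': "lok V E ((lnk s)(u := x))" using IA_lok[OF InvA_step[OF I en]] lnk' by simp
  note M0 = IA_msg[OF I m]
  have xu: "E x u" "lnk s x \<noteq> u" "r \<in> iss s" "prd s r = None" using M0 by auto
  have uV: "u \<in> V" and xV: "x \<in> V" using EV xu by auto
  have tx: "tail ?s' x = tail s x"
    unfolding tail_def lnk' lst' using F2[OF L xu(1,2)] by (metis sink_avoid)
  have cls: "tail ?s' q = tail s q \<or> (tail ?s' q = tail s x \<and> tail s q = tail s u)" if q: "q \<in> V" for q
    using cls_deliver[OF L L' xu(1,2) q] unfolding tail_def lnk' lst' by auto
  have tu': "tail ?s' u = tail s x"
  proof -
    have "sinkf V ((lnk s)(u := x)) u = sinkf V ((lnk s)(u := x)) (((lnk s)(u := x)) u)"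
      using sink_step[OF L' uV] by simp
    also have "\<dots> = sinkf V ((lnk s)(u := x)) x" by simp
    finally show ?thesis using tx unfolding tail_def lnk' lst' by simp
  qed
  have core: "(tail s u, r) \<in> tE ?s' \<and> {(c, d). (c, d) \<in> tE s \<and> c \<noteq> tail s u} \<subseteq> tE ?s' \<and>
      (\<forall>m'. m' \<in> trans s \<longrightarrow> m' \<noteq> ?m \<longrightarrow> m' \<in> trans ?s') \<and>
      (\<forall>c a. prd s c = Some a \<longrightarrow> prd ?s' c = Some a) \<and>
      (\<forall>r' x' y' \<sigma>'. (r', x', y', \<sigma>') \<in> trans ?s' \<longrightarrow> (r', x', y', \<sigma>') \<in> trans s \<or> (r' = r \<and> x' = u))"
  proof (cases "lnk s u = u")
    case True
    have trans': "trans ?s' = trans s - {?m}" and prd': "prd ?s' = (prd s)(r := Some (lst s u))"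
      by (simp_all only: deliver_trans deliver_prd if_P[OF True])
    have tu: "tail s u = lst s u" unfolding tail_def using sink_self[of "lnk s" u] True by simp
    have e: "(tail s u, r) \<in> tE ?s'" using tu prd' by (intro tE_prd) simp
    have pm: "\<forall>c a. prd s c = Some a \<longrightarrow> prd ?s' c = Some a" using prd' xu by auto
    have sub: "{(c, d). (c, d) \<in> tE s \<and> c \<noteq> tail s u} \<subseteq> tE ?s'"
    proof safe
      fix c d assume cd: "(c, d) \<in> tE s" "c \<noteq> tail s u"
      from cd(1) consider "prd s d = Some c" | "\<exists>x' y' \<sigma>'. (d, x', y', \<sigma>') \<in> trans s \<and> c = tail s y'"
        unfolding tE_def by auto
      then show "(c, d) \<in> tE ?s'"
      proof cases
        case 1 then show ?thesis using pm tE_prd by blast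
      next
        case 2
        then obtain x' y' \<sigma>' where mm: "(d, x', y', \<sigma>') \<in> trans s" "c = tail s y'" by blast
        have ne: "(d, x', y', \<sigma>') \<noteq> ?m" using mm cd(2) by auto
        have y': "y' \<in> V" using IA_msg[OF I mm(1)] EV by blast
        have "tail ?s' y' = tail s y'" using cls[OF y'] mm cd(2) by auto
        moreover have "(d, x', y', \<sigma>') \<in> trans ?s'" using mm ne trans' by simp
        ultimately show ?thesis using mm tE_msg by metis
      qed
    qed
    have nm: "\<forall>r' x' y' \<sigma>'. (r', x', y', \<sigma>') \<in> trans ?s' \<longrightarrow> (r', x', y', \<sigma>') \<in> trans s \<or> (r' = r \<and> x' = u)"
      using trans' by blast
    have kp: "\<forall>m'. m' \<in> trans s \<longrightarrow> m' \<noteq> ?m \<longrightarrow> m' \<in> trans ?s'" using trans' by blast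
    show ?thesis using e sub pm nm kp by blast
  next
    case False
    have trans': "trans ?s' = insert (r, u, ?z, \<tau>) (trans s - {?m})" and prd': "prd ?s' = prd s"
      by (simp_all only: deliver_trans deliver_prd if_not_P[OF False])
    have z_avoid: "((lnk s)^^k) ?z \<noteq> u" for k
    proof
      assume "((lnk s)^^k) ?z = u"
      then have "((lnk s)^^(Suc k)) u = u" by (simp only: funpow_Suc_right comp_apply)
      then have "lnk s u = u" using LC[OF L uV, of "Suc k"] by simp
      then show False using False by simp
    qed
    have tz: "tail ?s' ?z = tail s u"
    proof -
      have "sinkf V ((lnk s)(u := x)) ?z = sinkf V (lnk s) ?z" using z_avoid by (intro sink_avoid) blast
      moreover have "sinkf V (lnk s) ?z = sinkf V (lnk s) u" using sink_step[OF L uV] .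
      ultimately show ?thesis unfolding tail_def lnk' lst' by simp
    qed
    have e: "(tail s u, r) \<in> tE ?s'" using tE_msg[of r u ?z \<tau> ?s'] trans' tz by simp
    have pm: "\<forall>c a. prd s c = Some a \<longrightarrow> prd ?s' c = Some a" using prd' by auto
    have sub: "{(c, d). (c, d) \<in> tE s \<and> c \<noteq> tail s u} \<subseteq> tE ?s'"
    proof safe
      fix c d assume cd: "(c, d) \<in> tE s" "c \<noteq> tail s u"
      from cd(1) consider "prd s d = Some c" | "\<exists>x' y' \<sigma>'. (d, x', y', \<sigma>') \<in> trans s \<and> c = tail s y'"
        unfolding tE_def by auto
      then show "(c, d) \<in> tE ?s'"
      proof cases
        case 1 then show ?thesis using pm tE_prd by blast
      next
        case 2
        then obtain x' y' \<sigma>' where mm: "(d, x', y', \<sigma>') \<in> trans s" "c = tail s y'" by blast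
        have ne: "(d, x', y', \<sigma>') \<noteq> ?m" using mm cd(2) by auto
        have y': "y' \<in> V" using IA_msg[OF I mm(1)] EV by blast
        have "tail ?s' y' = tail s y'" using cls[OF y'] mm cd(2) by auto
        moreover have "(d, x', y', \<sigma>') \<in> trans ?s'" using mm ne trans' by simp
        ultimately show ?thesis using mm tE_msg by metis
      qed
    qed
    have nm: "\<forall>r' x' y' \<sigma>'. (r', x', y', \<sigma>') \<in> trans ?s' \<longrightarrow> (r', x', y', \<sigma>') \<in> trans s \<or> (r' = r \<and> x' = u)"
      using trans' by blast
    have kp: "\<forall>m'. m' \<in> trans s \<longrightarrow> m' \<noteq> ?m \<longrightarrow> m' \<in> trans ?s'" using trans' by blast
    show ?thesis using e sub pm nm kp by blast
  qed
  then have e: "(tail s u, r) \<in> tE ?s'" and sub: "{(c, d). (c, d) \<in> tE s \<and> c \<noteq> tail s u} \<subseteq> tE ?s'"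
    and keep: "\<And>m'. m' \<in> trans s \<Longrightarrow> m' \<noteq> ?m \<Longrightarrow> m' \<in> trans ?s'"
    and pm: "\<And>c a. prd s c = Some a \<Longrightarrow> prd ?s' c = Some a"
    and newm: "\<And>r' x' y' \<sigma>'. (r', x', y', \<sigma>') \<in> trans ?s' \<Longrightarrow> (r', x', y', \<sigma>') \<in> trans s \<or> (r' = r \<and> x' = u)"
    by blast+
  have key: "(r, tail s x) \<in> (tE ?s')\<^sup>*" using deliver_key[OF I B m sub] .
  have TM: "(tail s q, tail ?s' q) \<in> (tE ?s')\<^sup>*" if q: "q \<in> V" for q
  proof -
    consider "tail ?s' q = tail s q" | "tail ?s' q = tail s x" "tail s q = tail s u" using cls[OF q] by blast
    then show ?thesis
    proof cases
      case 1 then show ?thesis by simp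
    next
      case 2
      then show ?thesis using e key by (metis converse_rtrancl_into_rtrancl)
    qed
  qed
  have ms: "(tail s y, r') \<in> (tE ?s')\<^sup>*" if mm: "(r', x', y, \<sigma>') \<in> trans s" for r' x' y \<sigma>'
  proof (cases "(r', x', y, \<sigma>') = ?m")
    case True then show ?thesis using e by auto
  next
    case False
    have y: "y \<in> V" using IA_msg[OF I mm] EV by blast
    have "(tail ?s' y, r') \<in> tE ?s'" using keep[OF mm False] by (intro tE_msg[where x=x' and \<sigma>=\<sigma>'])
    then show ?thesis using TM[OF y] by (meson rtrancl.rtrancl_into_rtrancl)
  qed
  have M: "tE s \<subseteq> (tE ?s')\<^sup>*" by (rule mono_gen) (use pm ms in auto)
  have B': "InvB ?s'"
    unfolding InvB_def
  proof (intro conjI allI impI)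
    fix c assume c: "c \<in> iss ?s' \<or> c = r0"
    then have "(r0, c) \<in> (tE s)\<^sup>*" using B iss' unfolding InvB_def by auto
    then show "(r0, c) \<in> (tE ?s')\<^sup>*" using star_mono[OF M] by blast
  next
    fix r' x' y' \<sigma>' assume mm: "(r', x', y', \<sigma>') \<in> trans ?s'"
    consider "(r', x', y', \<sigma>') \<in> trans s" | "r' = r" "x' = u" using newm[OF mm] by blast
    then show "(r', tail ?s' x') \<in> (tE ?s')\<^sup>*"
    proof cases
      case 1
      have x': "x' \<in> V" using IA_msg[OF I 1] EV by blast
      have "(r', tail s x') \<in> (tE s)\<^sup>*" using B 1 unfolding InvB_def by blast
      then have "(r', tail s x') \<in> (tE ?s')\<^sup>*" using star_mono[OF M] by blast
      then show ?thesis using TM[OF x'] by (meson rtrancl_trans)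
    next
      case 2
      then show ?thesis using key tu' by simp
    qed
  qed
  show ?thesis using TM M B' e unfolding good_step_def by simp
qed

lemma step_B:
  assumes I: "InvA s" and B: "InvB s" and en: "enabled w R r0 time s e"
  shows "good_step s (step node time s e) \<and>
    (\<forall>a u \<tau>. visit e a node time u \<tau> \<longrightarrow> (tail s u, a) \<in> tE (step node time s e))"
proof (cases e)
  case (Issue r)
  have "good_step s (step node time s (Issue r)) \<and> (tail s (node r), r) \<in> tE (step node time s (Issue r))"
    using step_issue_self_B[OF I B] step_issue_other_B[OF I B] en Issue
    by (cases "lnk s (node r) = node r") auto
  then show ?thesis using Issue unfolding visit_def by auto
next
  case (Deliver m \<tau>)
  obtain r x u \<sigma> where mm: "m = (r, x, u, \<sigma>)" by (cases m) auto
  have "good_step s (step node time s e) \<and> (tail s u, r) \<in> tE (step node time s e)"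
    using step_deliver_B[OF I B] en Deliver mm by simp
  then show ?thesis using Deliver mm unfolding visit_def by auto
qed

end

definition etime :: "('r \<Rightarrow> real) \<Rightarrow> ('v, 'r) arrow_event \<Rightarrow> real" where
  "etime time e = (case e of Issue r \<Rightarrow> time r | Deliver m \<tau> \<Rightarrow> \<tau>)"

lemma clk_step: "clk (step node time s e) = etime time e"
  by (cases e) (auto simp: etime_def Let_def)

lemma enabled_clk: "enabled w R r0 time s e \<Longrightarrow> clk s \<le> etime time e"
  by (cases e) (auto simp: etime_def)

lemma valid_run_nth:
  "valid_run w R r0 node time s es \<Longrightarrow> k < length es \<Longrightarrow>
     enabled w R r0 time (foldl (step node time) s (take k es)) (es!k)"
proof (induction es arbitrary: s k)
  case Nil then show ?case by simp
next
  case (Cons e es)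
  show ?case
  proof (cases k)
    case 0 then show ?thesis using Cons by simp
  next
    case (Suc k')
    then show ?thesis using Cons by simp
  qed
qed

lemma visit_etime: "visit e a node time u \<tau> \<Longrightarrow> etime time e = \<tau>"
  by (auto simp: visit_def etime_def)

lemma vis_step:
  "vis (step node time s e) a u = vis s a u \<or>
   (\<exists>\<tau>. vis (step node time s e) a u = Some \<tau> \<and> visit e a node time u \<tau>)"
proof (cases e)
  case (Issue r)
  then show ?thesis unfolding visit_def by (simp add: issue_vis del: step.simps)
next
  case (Deliver m \<tau>)
  obtain r x u' \<sigma> where "m = (r, x, u', \<sigma>)" by (cases m) auto
  then show ?thesis using Deliver unfolding visit_def by (simp add: deliver_vis del: step.simps)
qed

lemma iss_step: "iss (step node time s e) = iss s \<or> (\<exists>r. e = Issue r \<and> iss (step node time s e) = insert r (iss s))"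
proof (cases e)
  case (Issue r) then show ?thesis by (simp add: issue_iss del: step.simps)
next
  case (Deliver m \<tau>)
  obtain r x u' \<sigma> where "m = (r, x, u', \<sigma>)" by (cases m) auto
  then show ?thesis using Deliver by (simp add: deliver_iss del: step.simps)
qed

lemma trans_step_remove:
  assumes "m \<in> trans s" "m \<notin> trans (step node time s e)"
  shows "\<exists>\<tau>. e = Deliver m \<tau>"
proof (cases e)
  case (Issue r) then show ?thesis using assms by (simp add: issue_trans del: step.simps split: if_splits)
next
  case (Deliver m' \<tau>)
  obtain r x u' \<sigma> where m': "m' = (r, x, u', \<sigma>)" by (cases m') auto
  have "m = m'" using assms Deliver m' by (simp add: deliver_trans del: step.simps split: if_splits)
  then show ?thesis using Deliver by simp
qed

locale arrowrun = arrowctx V E w R r0 node time lnk0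
  for V :: "'v set" and E w and R :: "'r set" and r0 node time lnk0 +
  fixes es :: "('v, 'r) arrow_event list"
  assumes exec: "arrow_execution w R r0 node time lnk0 es"
begin

abbreviation "n \<equiv> length es"

definition st :: "nat \<Rightarrow> ('v, 'r) arrow_state" where
  "st k = foldl (step node time) (init_state lnk0 r0) (take k es)"

lemma st0: "st 0 = init_state lnk0 r0" by (simp add: st_def)

lemma st_Suc: "k < n \<Longrightarrow> st (Suc k) = step node time (st k) (es!k)"
  by (simp add: st_def take_Suc_conv_app_nth)

lemma st_n: "st n = final_state node time r0 lnk0 es"
  by (simp add: st_def final_state_def)

lemma en: "k < n \<Longrightarrow> enabled w R r0 time (st k) (es!k)"
proof -
  assume k: "k < n"
  have "valid_run w R r0 node time (init_state lnk0 r0) es" using exec by (simp add: arrow_execution_def)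
  from valid_run_nth[OF this k] show ?thesis unfolding st_def .
qed

lemma final_trans: "trans (st n) = {}"
  using exec st_n unfolding arrow_execution_def by simp

lemma final_iss: "iss (st n) = R - {r0}"
  using exec st_n unfolding arrow_execution_def by simp

lemma Inv: "k \<le> n \<Longrightarrow> InvA (st k) \<and> InvB (st k)"
proof (induction k)
  case 0 then show ?case using InvA_init InvB_init st0 by simp
next
  case (Suc k)
  then have I: "InvA (st k)" and B: "InvB (st k)" and k: "k < n" by auto
  have "InvA (st (Suc k))" using InvA_step[OF I en[OF k]] st_Suc[OF k] by simp
  moreover have "InvB (st (Suc k))" using step_B[OF I B en[OF k]] st_Suc[OF k] unfolding good_step_def by simp
  ultimately show ?case by simp
qed

lemma IA: "k \<le> n \<Longrightarrow> InvA (st k)" using Inv by blast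
lemma IB: "k \<le> n \<Longrightarrow> InvB (st k)" using Inv by blast

lemma good: "k < n \<Longrightarrow> good_step (st k) (st (Suc k))"
proof -
  assume k: "k < n"
  have kk: "k \<le> n" using k by simp
  have "good_step (st k) (step node time (st k) (es!k))" using step_B[OF IA[OF kk] IB[OF kk] en[OF k]] by simp
  then show ?thesis using st_Suc[OF k] by simp
qed

lemma visit_edge: "k < n \<Longrightarrow> visit (es!k) a node time u \<tau> \<Longrightarrow> (tail (st k) u, a) \<in> tE (st (Suc k))"
proof -
  assume k: "k < n" and vi: "visit (es!k) a node time u \<tau>"
  have "(tail (st k) u, a) \<in> tE (step node time (st k) (es!k))"
  proof -
    have kk: "k \<le> n" using k by simp
    show ?thesis using step_B[OF IA[OF kk] IB[OF kk] en[OF k]] vi by blast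
  qed
  then show ?thesis using st_Suc[OF k] by simp
qed

lemma clk_Suc: "k < n \<Longrightarrow> clk (st (Suc k)) = etime time (es!k)"
  using st_Suc clk_step by simp

lemma clk_le: "k < n \<Longrightarrow> clk (st k) \<le> clk (st (Suc k))"
  using clk_Suc enabled_clk[OF en] by simp

lemma clk_mono: "j \<le> k \<Longrightarrow> k \<le> n \<Longrightarrow> clk (st j) \<le> clk (st k)"
proof (induction k)
  case 0 then show ?case by simp
next
  case (Suc k)
  show ?case
  proof (cases "j = Suc k")
    case True then show ?thesis by simp
  next
    case False
    then have "clk (st j) \<le> clk (st k)" using Suc by simp
    then show ?thesis using clk_le[of k] Suc.prems by simp
  qed
qed

lemma etime_mono: "j \<le> k \<Longrightarrow> k < n \<Longrightarrow> etime time (es!j) \<le> etime time (es!k)"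
  using clk_mono[of "Suc j" "Suc k"] clk_Suc by simp

lemma star_mono_run: "j \<le> k \<Longrightarrow> k \<le> n \<Longrightarrow> (tE (st j))\<^sup>* \<subseteq> (tE (st k))\<^sup>*"
proof (induction k)
  case 0 then show ?case by simp
next
  case (Suc k)
  show ?case
  proof (cases "j = Suc k")
    case True then show ?thesis by simp
  next
    case False
    then have a: "(tE (st j))\<^sup>* \<subseteq> (tE (st k))\<^sup>*" using Suc by simp
    have "tE (st k) \<subseteq> (tE (st (Suc k)))\<^sup>*" using good[of k] Suc.prems unfolding good_step_def by simp
    then have "(tE (st k))\<^sup>* \<subseteq> (tE (st (Suc k)))\<^sup>*" by (rule rtrancl_subset_rtrancl)
    then show ?thesis using a by blast
  qed
qed

lemma tail_mono_run: "j \<le> k \<Longrightarrow> k \<le> n \<Longrightarrow> q \<in> V \<Longrightarrow> (tail (st j) q, tail (st k) q) \<in> (tE (st k))\<^sup>*"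
proof (induction k)
  case 0 then show ?case by simp
next
  case (Suc k)
  show ?case
  proof (cases "j = Suc k")
    case True then show ?thesis by simp
  next
    case False
    then have a: "(tail (st j) q, tail (st k) q) \<in> (tE (st k))\<^sup>*" using Suc by simp
    have b: "(tail (st k) q, tail (st (Suc k)) q) \<in> (tE (st (Suc k)))\<^sup>*"
      using good[of k] Suc.prems unfolding good_step_def by simp
    have "(tail (st j) q, tail (st k) q) \<in> (tE (st (Suc k)))\<^sup>*"
      using a star_mono_run[of k "Suc k"] Suc.prems by auto
    then show ?thesis using b by (rule rtrancl_trans)
  qed
qed

lemma pending_bound:
  assumes k: "k < n" and m: "(r, x, y, \<sigma>) \<in> trans (st k)"
  shows "etime time (es!k) \<le> \<sigma> + w x y"
proof -
  let ?m = "(r, x, y, \<sigma>)"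
  have ex: "\<exists>j. k \<le> j \<and> j < n \<and> ?m \<in> trans (st j) \<and> ?m \<notin> trans (st (Suc j))"
  proof (rule ccontr)
    assume "\<not> ?thesis"
    then have step: "\<And>j. k \<le> j \<Longrightarrow> j < n \<Longrightarrow> ?m \<in> trans (st j) \<Longrightarrow> ?m \<in> trans (st (Suc j))" by blast
    have "?m \<in> trans (st (k + i))" if "k + i \<le> n" for i
      using that
    proof (induction i)
      case 0 then show ?case using m by simp
    next
      case (Suc i) then show ?case using step[of "k + i"] by simp
    qed
    then have "?m \<in> trans (st n)" using k by (metis le_add_diff_inverse less_imp_le order_refl)
    then show False using final_trans by simp
  qed
  then obtain j where j: "k \<le> j" "j < n" "?m \<in> trans (st j)" "?m \<notin> trans (st (Suc j))" by blast
  then obtain \<tau> where ev: "es!j = Deliver ?m \<tau>" using trans_step_remove st_Suc by metis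
  have "\<tau> \<le> \<sigma> + w x y" using en[OF j(2)] ev by simp
  moreover have "etime time (es!k) \<le> etime time (es!j)" using etime_mono j by simp
  ultimately show ?thesis using ev by (simp add: etime_def)
qed

lemma vis_event:
  assumes "k \<le> n" "vis (st k) a u = Some \<tau>"
  shows "\<exists>j < k. visit (es!j) a node time u \<tau>"
  using assms
proof (induction k)
  case 0 then show ?case by (simp add: st0 init_state_def)
next
  case (Suc k)
  have k: "k < n" using Suc by simp
  consider "vis (st (Suc k)) a u = vis (st k) a u"
    | "\<exists>\<tau>'. vis (st (Suc k)) a u = Some \<tau>' \<and> visit (es!k) a node time u \<tau>'"
    using vis_step[of node time "st k" "es!k" a u] st_Suc[OF k] by auto
  then show ?case
  proof cases
    case 1 then show ?thesis using Suc by (metis less_SucI Suc_leD)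
  next
    case 2 then show ?thesis using Suc by auto
  qed
qed

lemma iss_event:
  assumes "k \<le> n" "b \<in> iss (st k)"
  shows "\<exists>j < k. es!j = Issue b"
  using assms
proof (induction k)
  case 0 then show ?case by (simp add: st0 init_state_def)
next
  case (Suc k)
  have k: "k < n" using Suc by simp
  consider "iss (st (Suc k)) = iss (st k)" | r where "es!k = Issue r" "iss (st (Suc k)) = insert r (iss (st k))"
    using iss_step[of node time "st k" "es!k"] st_Suc[OF k] by auto
  then show ?case
  proof cases
    case 1 then show ?thesis using Suc by (metis less_SucI Suc_leD)
  next
    case 2 then show ?thesis using Suc by (cases "b = r") (auto, metis less_SucI Suc_leD)
  qed
qed

lemma prd_src: "k \<le> n \<Longrightarrow> prd (st k) c = Some a \<Longrightarrow> a \<in> iss (st k) \<or> a = r0"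
proof (induction k arbitrary: c a)
  case 0 then show ?case by (simp add: st0 init_state_def)
next
  case (Suc k)
  have k: "k < n" using Suc by simp
  have I: "InvA (st k)" using IA k by simp
  have issm: "iss (st k) \<subseteq> iss (st (Suc k))" using iss_step[of node time "st k" "es!k"] st_Suc[OF k] by auto
  show ?case
  proof (cases "es!k")
    case (Issue r)
    have v: "node r \<in> V" using en[OF k] Issue nodeV by simp
    show ?thesis
    proof (cases "prd (st k) c = Some a")
      case True then show ?thesis using Suc issm k by auto
    next
      case False
      then have "c = r" "a = lst (st k) (node r)" using Suc.prems
        by (auto simp: st_Suc[OF k] Issue issue_prd simp del: step.simps split: if_splits)
      then show ?thesis using IA_lst2[OF I v] issm by auto
    qed
  next
    case (Deliver m \<tau>)
    obtain r x u \<sigma> where mm: "m = (r, x, u, \<sigma>)" by (cases m) auto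
    have uV: "u \<in> V" using en[OF k] Deliver mm IA_msg[OF I] EV by fastforce
    show ?thesis
    proof (cases "prd (st k) c = Some a")
      case True then show ?thesis using Suc issm k by auto
    next
      case False
      then have "c = r" "a = lst (st k) u" using Suc.prems
        by (auto simp: st_Suc[OF k] Deliver mm deliver_prd simp del: step.simps split: if_splits)
      then show ?thesis using IA_lst2[OF I uV] issm by auto
    qed
  qed
qed

end

context arrowctx
begin

lemma boundary:
  assumes I: "InvA s" and B: "InvB s" and pq: "E p q"
    and mp: "(b, tail s p) \<in> (tE s)\<^sup>*" and mq: "(b, tail s q) \<notin> (tE s)\<^sup>*"
  shows "\<exists>r \<sigma>. (r, p, q, \<sigma>) \<in> trans s"
proof -
  have L: "lok V E (lnk s)" using IA_lok[OF I] .
  have pV: "p \<in> V" and qV: "q \<in> V" using EV pq by auto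
  consider "lnk s p = q" | "lnk s q = p" | "\<exists>r \<sigma>. (r, p, q, \<sigma>) \<in> trans s" | "\<exists>r \<sigma>. (r, q, p, \<sigma>) \<in> trans s"
    using IA_cov[OF I pq] by blast
  then show ?thesis
  proof cases
    case 1
    then have "tail s q = tail s p" unfolding tail_def using sink_step[OF L pV] by simp
    then show ?thesis using mp mq by simp
  next
    case 2
    then have "tail s q = tail s p" unfolding tail_def using sink_step[OF L qV] by simp
    then show ?thesis using mp mq by simp
  next
    case 3 then show ?thesis .
  next
    case 4
    then obtain r \<sigma> where m: "(r, q, p, \<sigma>) \<in> trans s" by blast
    have "(tail s p, r) \<in> tE s" using tE_msg[OF m] .
    moreover have "(r, tail s q) \<in> (tE s)\<^sup>*" using B m unfolding InvB_def by blast
    ultimately have "(b, tail s q) \<in> (tE s)\<^sup>*" using mp by (meson rtrancl.rtrancl_into_rtrancl rtrancl_trans)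
    then show ?thesis using mq by simp
  qed
qed

end

context arrowrun
begin

definition marked :: "'r \<Rightarrow> nat \<Rightarrow> 'v \<Rightarrow> bool" where
  "marked b k q \<longleftrightarrow> (b, tail (st k) q) \<in> (tE (st k))\<^sup>*"

lemma marked_mono: "j \<le> k \<Longrightarrow> k \<le> n \<Longrightarrow> q \<in> V \<Longrightarrow> marked b j q \<Longrightarrow> marked b k q"
  unfolding marked_def using star_mono_run tail_mono_run by (meson rtrancl_trans subsetD)

definition TB :: "'r \<Rightarrow> nat \<Rightarrow> bool" where
  "TB b k \<longleftrightarrow> (\<forall>r x y \<sigma>. (r, x, y, \<sigma>) \<in> trans (st k) \<longrightarrow> marked b k x \<longrightarrow> \<not> marked b k y \<longrightarrow>
     \<sigma> \<le> time b + tree_dist E w (node b) x)"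

lemma issue_b_facts:
  assumes jb: "jb < n" and eb: "es!jb = Issue b"
  shows "b \<in> R" "node b \<in> V" "clk (st (Suc jb)) = time b" "tail (st (Suc jb)) (node b) = b"
proof -
  show bR: "b \<in> R" using en[OF jb] eb by simp
  show bV: "node b \<in> V" using nodeV[OF bR] .
  show "clk (st (Suc jb)) = time b" using clk_Suc[OF jb] eb by (simp add: etime_def)
  have s: "st (Suc jb) = step node time (st jb) (Issue b)" using st_Suc[OF jb] eb by simp
  have "lnk (st (Suc jb)) (node b) = node b" using s by (simp add: issue_lnk del: step.simps)
  then have "sinkf V (lnk (st (Suc jb))) (node b) = node b" by (rule sink_self)
  moreover have "lst (st (Suc jb)) (node b) = b" using s by (simp add: issue_lst del: step.simps)
  ultimately show "tail (st (Suc jb)) (node b) = b" unfolding tail_def by simp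
qed

lemma nb_marked:
  assumes jb: "jb < n" and eb: "es!jb = Issue b" and k: "jb < k" "k \<le> n"
  shows "marked b k (node b)"
proof -
  have "marked b (Suc jb) (node b)" unfolding marked_def using issue_b_facts[OF jb eb] by simp
  then show ?thesis using marked_mono[of "Suc jb" k "node b" b] k issue_b_facts[OF jb eb] by simp
qed

lemma walk_arg:
  assumes jb: "jb < n" and eb: "es!jb = Issue b" and k: "jb < k" "k < n" and TBk: "TB b k"
    and q: "q \<in> V" and nm: "\<not> marked b k q"
  shows "etime time (es!k) \<le> time b + tree_dist E w (node b) q"
proof -
  have kk: "k \<le> n" using k by simp
  have I: "InvA (st k)" and B: "InvB (st k)" using IA[OF kk] IB[OF kk] .
  have bV: "node b \<in> V" using issue_b_facts[OF jb eb] by simp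
  have "etime time (es!k) - time b \<le> tree_dist E w (node b) q"
  proof (rule dist_ge[OF bV q])
    fix W assume W: "is_walk E W" "hd W = node b" "last W = q"
    have Wne: "W \<noteq> []" using W by (simp add: is_walk_def)
    let ?P = "\<lambda>i. i < length W \<and> \<not> marked b k (W!i)"
    have Plast: "?P (length W - 1)" using W Wne nm by (simp add: last_conv_nth)
    define i0 where "i0 = (LEAST i. ?P i)"
    have P0: "?P i0" unfolding i0_def by (rule LeastI[of ?P, OF Plast])
    have Pmin: "\<And>i. i < i0 \<Longrightarrow> \<not> ?P i" unfolding i0_def using not_less_Least by blast
    have "W!0 = node b" using W Wne by (simp add: hd_conv_nth)
    then have "marked b k (W!0)" using nb_marked[OF jb eb k(1) kk] by simp
    then have i0pos: "i0 \<noteq> 0" using P0 by (metis)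
    define i where "i = i0 - 1"
    have ii: "Suc i = i0" using i0pos i_def by simp
    have ilt: "Suc i < length W" using P0 ii by simp
    have mp: "marked b k (W!i)" using Pmin[of i] ii ilt by simp
    have mq: "\<not> marked b k (W!Suc i)" using P0 ii by simp
    have Epq: "E (W!i) (W!Suc i)" using W ilt by (simp add: is_walk_def)
    obtain r \<sigma> where m: "(r, W!i, W!Suc i, \<sigma>) \<in> trans (st k)"
      using boundary[OF I B Epq] mp mq unfolding marked_def by blast
    have s1: "\<sigma> \<le> time b + tree_dist E w (node b) (W!i)" using TBk m mp mq unfolding TB_def by blast
    have s2: "etime time (es!k) \<le> \<sigma> + w (W!i) (W!Suc i)" using pending_bound[OF k(2) m] .
    have wt: "is_walk E (take (Suc i) W) \<and> hd (take (Suc i) W) = hd W \<and> last (take (Suc i) W) = W!i"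
      using walk_take[OF W(1)] ilt by simp
    have s3: "tree_dist E w (node b) (W!i) \<le> walk_weight w (take (Suc i) W)"
      using dist_le_walk wt W(2) by metis
    have s4: "walk_weight w (take (Suc (Suc i)) W) = walk_weight w (take (Suc i) W) + w (W!i) (W!Suc i)"
      using walk_weight_take_Suc[OF ilt] .
    have s5: "walk_weight w (take (Suc (Suc i)) W) \<le> walk_weight w W" using walk_weight_take_le[OF W(1)] .
    show "etime time (es!k) - time b \<le> walk_weight w W" using s1 s2 s3 s4 s5 by linarith
  qed
  then show ?thesis by simp
qed

lemma TB_all:
  assumes jb: "jb < n" and eb: "es!jb = Issue b"
  shows "jb < k \<Longrightarrow> k \<le> n \<Longrightarrow> TB b k"
proof (induction k)
  case 0 then show ?case by simp
next
  case (Suc k)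
  have bV: "node b \<in> V" using issue_b_facts[OF jb eb] by simp
  have k: "k < n" using Suc by simp
  have I': "InvA (st (Suc k))" using IA Suc.prems by simp
  show ?case
  proof (cases "k = jb")
    case True
    show ?thesis unfolding TB_def
    proof (intro allI impI)
      fix r x y \<sigma> assume m: "(r, x, y, \<sigma>) \<in> trans (st (Suc k))"
      have "\<sigma> \<le> clk (st (Suc k))" using IA_msg[OF I' m] by simp
      also have "\<dots> = time b" using issue_b_facts[OF jb eb] True by simp
      finally have "\<sigma> \<le> time b" .
      moreover have "x \<in> V" using IA_msg[OF I' m] EV by blast
      ultimately show "\<sigma> \<le> time b + tree_dist E w (node b) x" using dist_nonneg[OF bV] by fastforce
    qed
  next
    case False
    then have jk: "jb < k" using Suc by simp
    have TBk: "TB b k" using Suc jk by simp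
    have kk: "k \<le> n" using k by simp
    have I: "InvA (st k)" and B: "InvB (st k)" using IA[OF kk] IB[OF kk] .
    show ?thesis unfolding TB_def
    proof (intro allI impI)
      fix r x y \<sigma> assume m: "(r, x, y, \<sigma>) \<in> trans (st (Suc k))"
        and mx: "marked b (Suc k) x" and my: "\<not> marked b (Suc k) y"
      have Exy: "E x y" using IA_msg[OF I' m] by simp
      have xV: "x \<in> V" and yV: "y \<in> V" using EV Exy by auto
      have my0: "\<not> marked b k y" using my marked_mono[of k "Suc k" y b] Suc.prems yV by auto
      show "\<sigma> \<le> time b + tree_dist E w (node b) x"
      proof (cases "marked b k x")
        case True
        show ?thesis
        proof (cases "(r, x, y, \<sigma>) \<in> trans (st k)")
          case True2: True
          then show ?thesis using TBk True my0 unfolding TB_def by blast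
        next
          case False2: False
          obtain r'' \<sigma>'' where m2: "(r'', x, y, \<sigma>'') \<in> trans (st k)"
            using boundary[OF I B Exy] True my0 unfolding marked_def by blast
          have ne: "(r'', x, y, \<sigma>'') \<noteq> (r, x, y, \<sigma>)" using m2 False2 by auto
          show ?thesis
          proof (cases "(r'', x, y, \<sigma>'') \<in> trans (st (Suc k))")
            case True
            then have "r'' = r \<and> x = x \<and> y = y \<and> \<sigma>'' = \<sigma>" using IA_uniq[OF I' True m] by blast
            then show ?thesis using ne by simp
          next
            case False
            then obtain \<tau> where ev: "es!k = Deliver (r'', x, y, \<sigma>'') \<tau>"
              using trans_step_remove[OF m2] st_Suc[OF k] by metis
            have "lnk (st (Suc k)) y = x" using st_Suc[OF k] ev by (simp add: deliver_lnk del: step.simps)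
            then have "tail (st (Suc k)) y = tail (st (Suc k)) x"
              unfolding tail_def using sink_step[OF IA_lok[OF I'] yV] by simp
            then show ?thesis using mx my unfolding marked_def by simp
          qed
        qed
      next
        case False
        have "\<sigma> \<le> clk (st (Suc k))" using IA_msg[OF I' m] by simp
        also have "\<dots> = etime time (es!k)" using clk_Suc[OF k] .
        also have "\<dots> \<le> time b + tree_dist E w (node b) x" using walk_arg[OF jb eb jk k TBk xV False] .
        finally show ?thesis .
      qed
    qed
  qed
qed


lemma visit_V: "k < n \<Longrightarrow> visit (es!k) a node time u \<tau> \<Longrightarrow> u \<in> V"
proof -
  assume k: "k < n" and vi: "visit (es!k) a node time u \<tau>"
  have kk: "k \<le> n" using k by simp
  consider "es!k = Issue a" "u = node a" | x \<sigma> where "es!k = Deliver (a, x, u, \<sigma>) \<tau>"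
    using vi unfolding visit_def by blast
  then show "u \<in> V"
  proof cases
    case 1 then show ?thesis using en[OF k] nodeV by simp
  next
    case 2
    then have "(a, x, u, \<sigma>) \<in> trans (st k)" using en[OF k] by simp
    then show ?thesis using IA_msg[OF IA[OF kk]] EV by blast
  qed
qed

lemma qb_sub: "queue_before R (st n) \<subseteq> (tE (st n))\<^sup>+"
proof -
  have "{(x, y). y \<in> R \<and> prd (st n) y = Some x} \<subseteq> tE (st n)" using tE_prd by blast
  then show ?thesis unfolding queue_before_def using trancl_mono by blast
qed

lemma qb_b: "(a, b) \<in> queue_before R (st n) \<Longrightarrow> b \<in> iss (st n)"
proof -
  assume "(a, b) \<in> queue_before R (st n)"
  then obtain z where "(z, b) \<in> {(x, y). y \<in> R \<and> prd (st n) y = Some x}"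
    unfolding queue_before_def by (meson tranclD2)
  then have "prd (st n) b = Some z" by simp
  then show ?thesis using IA_prd[OF IA[of n]] by simp
qed

lemma qb_a: "(a, b) \<in> queue_before R (st n) \<Longrightarrow> a \<in> iss (st n) \<or> a = r0"
proof -
  assume "(a, b) \<in> queue_before R (st n)"
  then obtain z where "(a, z) \<in> {(x, y). y \<in> R \<and> prd (st n) y = Some x}"
    unfolding queue_before_def by (meson tranclD)
  then have "prd (st n) z = Some a" by simp
  then show ?thesis using prd_src[of n z a] by simp
qed

lemma visit_bound:
  assumes qb: "(a, b) \<in> queue_before R (st n)" and k: "k < n" and vi: "visit (es!k) a node time u \<tau>"
  shows "\<tau> \<le> time b + tree_dist E w (node b) u"
proof (rule ccontr)
  assume gt: "\<not> \<tau> \<le> time b + tree_dist E w (node b) u"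
  have bI: "b \<in> iss (st n)" using qb_b[OF qb] .
  obtain jb where jb: "jb < n" "es!jb = Issue b" using iss_event[OF le_refl bI] by blast
  have bV: "node b \<in> V" using issue_b_facts[OF jb] by simp
  have uV: "u \<in> V" using visit_V[OF k vi] .
  have d0: "0 \<le> tree_dist E w (node b) u" using dist_nonneg[OF bV uV] .
  have et: "etime time (es!k) = \<tau>" using visit_etime[OF vi] .
  have jk: "jb < k"
  proof (rule ccontr)
    assume "\<not> jb < k"
    then have "k \<le> jb" by simp
    then have "etime time (es!k) \<le> etime time (es!jb)" using etime_mono[OF _ jb(1)] by simp
    then have "\<tau> \<le> time b" using et jb by (simp add: etime_def)
    then show False using gt d0 by linarith
  qed
  have kk: "k \<le> n" using k by simp
  have TBk: "TB b k" using TB_all[OF jb jk kk] .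
  have mk: "marked b k u"
  proof (rule ccontr)
    assume "\<not> marked b k u"
    then have "etime time (es!k) \<le> time b + tree_dist E w (node b) u" using walk_arg[OF jb jk k TBk uV] by simp
    then show False using gt et by simp
  qed
  have "(b, tail (st k) u) \<in> (tE (st (Suc k)))\<^sup>*"
    using mk star_mono_run[of k "Suc k"] k unfolding marked_def by auto
  moreover have "(tail (st k) u, a) \<in> tE (st (Suc k))" using visit_edge[OF k vi] .
  ultimately have "(b, a) \<in> (tE (st (Suc k)))\<^sup>*" by (rule rtrancl.rtrancl_into_rtrancl)
  then have ba: "(b, a) \<in> (tE (st n))\<^sup>*" using star_mono_run[of "Suc k" n] k by auto
  have "(a, b) \<in> (tE (st n))\<^sup>+" using qb qb_sub by blast
  then have "(b, b) \<in> (tE (st n))\<^sup>+" using ba by (meson rtrancl_trancl_trancl)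
  then show False using tE_acyc[OF IA[of n] IB[of n]] bI by simp
qed

lemma main:
  assumes qb0: "(a, b) \<in> queue_before R (final_state node time r0 lnk0 es)"
  shows "time a - time b \<le> tree_dist E w (node a) (node b) \<and>
         (\<forall>p. a \<noteq> r0 \<longrightarrow> prd (final_state node time r0 lnk0 es) a = Some p \<longrightarrow>
           time a + Delta E w (final_state node time r0 lnk0 es) time a (node p)
             \<le> time b + tree_dist E w (node p) (node b))"
proof -
  have qb: "(a, b) \<in> queue_before R (st n)" using qb0 st_n by simp
  have I: "InvA (st n)" using IA by simp
  have bI: "b \<in> iss (st n)" using qb_b[OF qb] .
  have bR: "b \<in> R" using bI IA_iss[OF I] by auto
  have bV: "node b \<in> V" using nodeV[OF bR] .
  have tb: "0 \<le> time b" using time_nn[OF bR] .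
  have part1: "time a - time b \<le> tree_dist E w (node a) (node b)"
  proof (cases "a = r0")
    case True
    have "0 \<le> tree_dist E w (node a) (node b)" using dist_nonneg[OF _ bV] True v0V by simp
    then show ?thesis using True time0 tb by simp
  next
    case False
    then have aI: "a \<in> iss (st n)" using qb_a[OF qb] by simp
    obtain ka where ka: "ka < n" "es!ka = Issue a" using iss_event[OF le_refl aI] by blast
    have "visit (es!ka) a node time (node a) (time a)" using ka unfolding visit_def by simp
    then have "time a \<le> time b + tree_dist E w (node b) (node a)" using visit_bound[OF qb ka(1)] by simp
    then show ?thesis using dist_sym by simp
  qed
  have part2: "time a + Delta E w (st n) time a (node p) \<le> time b + tree_dist E w (node p) (node b)"
    if an: "a \<noteq> r0" and pp: "prd (st n) a = Some p" for p
  proof -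
    let ?np = "node p"
    let ?P = "\<lambda>q. vis (st n) a q \<noteq> None"
    let ?f = "\<lambda>q. tree_dist E w q ?np"
    have npS: "?P ?np" using IA_pv[OF I pp] .
    have npV: "?np \<in> V" using IA_vis[OF I npS] .
    have "{q. ?P q} \<subseteq> V" using IA_vis[OF I] by blast
    then have fin: "finite {q. ?P q}" using finV by (rule finite_subset)
    have ne: "{q. ?P q} \<noteq> {}" using npS by blast
    obtain p0 where "is_arg_min ?f (\<lambda>q. q \<in> {q. ?P q}) p0"
      using ex_is_arg_min_if_finite[OF fin ne, of ?f] by blast
    then have "is_arg_min ?f ?P p0" by simp
    then have am: "is_arg_min ?f ?P (arg_min ?f ?P)" unfolding arg_min_def by (rule someI)
    define p' where "p' = arg_min ?f ?P"
    have p'P: "?P p'" and p'min: "\<not> (\<exists>y. ?P y \<and> ?f y < ?f p')"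
      using am unfolding is_arg_min_def p'_def by auto
    obtain \<tau> where tau: "vis (st n) a p' = Some \<tau>" using p'P by blast
    have p'V: "p' \<in> V" using IA_vis[OF I p'P] .
    obtain k where k: "k < n" "visit (es!k) a node time p' \<tau>" using vis_event[OF le_refl tau] by blast
    have b1: "\<tau> \<le> time b + tree_dist E w (node b) p'" using visit_bound[OF qb k] .
    have "\<forall>y. ?P y \<longrightarrow> \<not> ?f y < ?f p'" using p'min by blast
    then have "\<not> ?f ?np < ?f p'" using npS by blast
    then have b2: "tree_dist E w p' ?np \<le> 0" using dist_self[OF npV] by simp
    have b3: "tree_dist E w (node b) p' \<le> tree_dist E w (node b) ?np + tree_dist E w ?np p'"
      using dist_triangle[OF bV npV p'V] .
    have b4: "tree_dist E w ?np p' = tree_dist E w p' ?np" using dist_sym .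
    have b5: "tree_dist E w (node b) ?np = tree_dist E w ?np (node b)" using dist_sym .
    have rt: "reach_time E w (st n) a ?np = \<tau> + tree_dist E w p' ?np"
      unfolding reach_time_def Let_def p'_def[symmetric] using tau by simp
    have "time a + Delta E w (st n) time a ?np = reach_time E w (st n) a ?np"
      unfolding Delta_def by simp
    then show ?thesis using rt b1 b2 b3 b4 b5 by linarith
  qed
  have fs: "final_state node time r0 lnk0 es = st n" using st_n by simp
  show ?thesis unfolding fs using part1 part2 by blast
qed

end

theorem lemma14:
  fixes V :: "'v set" and E :: "'v \<Rightarrow> 'v \<Rightarrow> bool" and w :: "'v \<Rightarrow> 'v \<Rightarrow> real"
    and R :: "'r set" and r0 :: 'r and node :: "'r \<Rightarrow> 'v" and time :: "'r \<Rightarrow> real"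
    and lnk0 :: "'v \<Rightarrow> 'v" and es :: "('v, 'r) arrow_event list" and a b :: 'r
  assumes "weighted_tree V E w"
    and "arrow_requests V R r0 node time"
    and "initial_links V E w (node r0) lnk0"
    and "arrow_execution w R r0 node time lnk0 es"
    and "(a, b) \<in> queue_before R (final_state node time r0 lnk0 es)"
  shows "time a - time b \<le> tree_dist E w (node a) (node b) \<and>
         (\<forall>p. a \<noteq> r0 \<longrightarrow> prd (final_state node time r0 lnk0 es) a = Some p \<longrightarrow>
           time a + Delta E w (final_state node time r0 lnk0 es) time a (node p)
             \<le> time b + tree_dist E w (node p) (node b))"
proof -
  interpret arrowrun V E w R r0 node time lnk0 es
    using assms by unfold_locales (simp_all add: wtree_def)
  show ?thesis using main[OF assms(5)] .
qed

end
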